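(* Suppose that for every $i=1,\dots,N$ either ($F_i$ satisfies the Production Function Assumption (a) and $W_i$ satisfies the Labor Cost Assumption) or ($F_i$ satisfies the Production Function Assumption (b) and $W_i$ satisfies the Labor Cost and Growth Assumptions). Assume the net demand functions satisfy the Net Demand Assumption and that either the Market Viability Assumption or the Unbounded External Supply Assumption holds. Then there exists a competitive equilibrium $(\mathbf P^*,\mathcal Q^*,\mathbf E^*,\mathbf L^* )\in\mathbb R^N_{>0}\times\mathbb R^{N(N+2)}_{\ge0}$, and the equilibrium price vector $\mathbf P^*$ is unique. Moreover, if every $F_i$ is strictly concave and every $W_i$ is strictly convex, the competitive equilibrium is unique.
   Context: Economy with $N$ sectors; sector $i$ has production function $F_i:\mathbb R^{N+2}_{\ge0}\to\mathbb R_{\ge0}$ (inputs $(\mathbf q_i,E_i,L_i)$, $\mathbf q_i=(q_{ij})_{j=1}^N$), labor cost $W_i:\mathbb R_{\ge0}\to\mathbb R_{>0}$, net demand $D_i:\mathbb R_{\ge0}\to\mathbb R$; carbon price $P_E>0$ fixed. Profit $\Pi_i(\mathbf P,P_E,\mathbf q_i,E_i,L_i)=P_iF_i(\mathbf q_i,E_i,L_i)-\sum_jP_jq_{ij}-P_EE_i-W_i(L_i)$. Production Function Assumption: $F_i$ increasing in each argument, upper semi-continuous and concave, and either (a) $F_i(\mathbf x)=o(\|\mathbf x\|)$ as $\|\mathbf x\|\to\infty$, or (b) $F_i$ is homogeneous of degree one and $F_i(\mathbf q,E,L)\le c_iL$ for some $c_i<\infty$. Labor Cost Assumption: $W_i$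 strictly increasing, lower semi-continuous, convex. Growth Assumption: $\lim_{L\to\infty}W_i(L)/L=+\infty$. Net Demand Assumption: $D_i$ strictly decreasing and continuous on $\mathbb R_{>0}$, $\lim_{P\to0}D_i(P)=\infty$, $\lim_{P\to\infty}D_i(P)\le0$. Market Viability Assumption: there exist $(\overline{\mathcal Q},\overline{\mathbf E},\overline{\mathbf L})\in\mathbb R^{N(N+2)}_{\ge0}$ and $\overline{\mathbf P}\in\mathbb R^N_{>0}$ with $\overline P_iF_i(\overline{\mathbf q}_i,\overline E_i,\overline L_i)-\sum_j\overline P_j\overline q_{ij}>0$ for every $i$. Unbounded External Supply Assumption: $\lim_{P\to\infty}D_i(P)=-\infty$ for every $i$. Competitive equilibrium: $(\mathbf P^*,\mathcal Q^*,\mathbf E^*,\mathbf L^* )\in\mathbb R^N_{\ge0}\times\mathbb R^{N(N+2)}_{\ge0}$ such that for each $i$: (i) $F_i(\mathbf q_i^*,E_i^*,L_i^* )=D_i(P_i^* )+\sum_{j=1}^Nq^*_{ji}$; (ii) $(\mathbf q_i^*,E_i^*,L_i^* )$ maximizes $\Pi_i(\mathbf P^*,P_E,\cdot)$ over $\mathbb R^{N+2}_{\ge0}$. *)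

theory Defs
  imports "HOL-Analysis.Analysis"
begin

text \<open>Sectors are indexed by a finite type 'n (N = CARD('n)).
  Input bundle of sector i: (q_i, E_i, L_i) :: real^'n * real * real.\<close>

type_synonym 'n input = "(real^'n) \<times> real \<times> real"

definition input_dom :: "'n::finite input set" where
  "input_dom = {(q, E, L). (\<forall>j. 0 \<le> q $ j) \<and> 0 \<le> E \<and> 0 \<le> L}"

definition input_le :: "'n::finite input \<Rightarrow> 'n input \<Rightarrow> bool" where
  "input_le x y \<longleftrightarrow> (\<forall>j. fst x $ j \<le> fst y $ j) \<and>
      fst (snd x) \<le> fst (snd y) \<and> snd (snd x) \<le> snd (snd y)"

definition usc_on :: "'a::topological_space set \<Rightarrow> ('a \<Rightarrow> real) \<Rightarrow> bool" where
  "usc_on S f \<longleftrightarrow> (\<forall>a. openin (top_of_set S) {x \<in> S. f x < a})"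

definition lsc_on :: "'a::topological_space set \<Rightarrow> ('a \<Rightarrow> real) \<Rightarrow> bool" where
  "lsc_on S f \<longleftrightarrow> (\<forall>a. openin (top_of_set S) {x \<in> S. a < f x})"

definition strictly_concave_on :: "'a::real_vector set \<Rightarrow> ('a \<Rightarrow> real) \<Rightarrow> bool" where
  "strictly_concave_on S f \<longleftrightarrow> convex S \<and>
     (\<forall>x\<in>S. \<forall>y\<in>S. x \<noteq> y \<longrightarrow> (\<forall>t. 0 < t \<and> t < 1 \<longrightarrow>
        (1 - t) * f x + t * f y < f ((1 - t) *\<^sub>R x + t *\<^sub>R y)))"

definition strictly_convex_on :: "'a::real_vector set \<Rightarrow> ('a \<Rightarrow> real) \<Rightarrow> bool" where
  "strictly_convex_on S f \<longleftrightarrow> convex S \<and>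
     (\<forall>x\<in>S. \<forall>y\<in>S. x \<noteq> y \<longrightarrow> (\<forall>t. 0 < t \<and> t < 1 \<longrightarrow>
        f ((1 - t) *\<^sub>R x + t *\<^sub>R y) < (1 - t) * f x + t * f y))"

definition prod_common :: "('n::finite input \<Rightarrow> real) \<Rightarrow> bool" where
  "prod_common F \<longleftrightarrow>
     (\<forall>x\<in>input_dom. \<forall>y\<in>input_dom. input_le x y \<longrightarrow> F x \<le> F y) \<and>
     usc_on input_dom F \<and> concave_on input_dom F"

definition prod_assm_a :: "('n::finite input \<Rightarrow> real) \<Rightarrow> bool" where
  "prod_assm_a F \<longleftrightarrow> prod_common F \<and>
     (\<forall>\<epsilon>>0. \<exists>R. \<forall>x\<in>input_dom. R \<le> norm x \<longrightarrow> \<bar>F x\<bar> \<le> \<epsilon> * norm x)"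

definition prod_assm_b :: "('n::finite input \<Rightarrow> real) \<Rightarrow> bool" where
  "prod_assm_b F \<longleftrightarrow> prod_common F \<and>
     (\<forall>x\<in>input_dom. \<forall>t>0. F (t *\<^sub>R x) = t * F x) \<and>
     (\<exists>c. \<forall>q E L. (q, E, L) \<in> input_dom \<longrightarrow> F (q, E, L) \<le> c * L)"

definition labor_assm :: "(real \<Rightarrow> real) \<Rightarrow> bool" where
  "labor_assm W \<longleftrightarrow> strict_mono_on {0..} W \<and> lsc_on {0..} W \<and> convex_on {0..} W"

definition growth_assm :: "(real \<Rightarrow> real) \<Rightarrow> bool" where
  "growth_assm W \<longleftrightarrow> filterlim (\<lambda>L. W L / L) at_top at_top"

text \<open>Net Demand Assumption. lim_{P->oo} D(P) <= 0 is written as: D eventually lies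
  below every positive epsilon (the limit exists in [-oo,oo) by monotonicity).\<close>
definition demand_assm :: "(real \<Rightarrow> real) \<Rightarrow> bool" where
  "demand_assm D \<longleftrightarrow>
     (\<forall>x>0. \<forall>y>0. x < y \<longrightarrow> D y < D x) \<and>
     continuous_on {0<..} D \<and>
     filterlim D at_top (at_right 0) \<and>
     (\<forall>\<epsilon>>0. eventually (\<lambda>P. D P < \<epsilon>) at_top)"

definition profit ::
  "('n::finite \<Rightarrow> 'n input \<Rightarrow> real) \<Rightarrow> ('n \<Rightarrow> real \<Rightarrow> real) \<Rightarrow> 'n \<Rightarrow> real^'n \<Rightarrow> real
     \<Rightarrow> real^'n \<Rightarrow> real \<Rightarrow> real \<Rightarrow> real" where
  "profit F W i P PE q E L =
     P $ i * F i (q, E, L) - (\<Sum>j\<in>UNIV. P $ j * q $ j) - PE * E - W i L"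

text \<open>Market Viability Assumption; Q $ i $ j = q_ij.\<close>
definition market_viability ::
  "('n::finite \<Rightarrow> 'n input \<Rightarrow> real) \<Rightarrow> bool" where
  "market_viability F \<longleftrightarrow>
     (\<exists>(Q::real^'n^'n) (E::real^'n) (L::real^'n) (P::real^'n).
        (\<forall>i j. 0 \<le> Q $ i $ j) \<and> (\<forall>i. 0 \<le> E $ i) \<and> (\<forall>i. 0 \<le> L $ i) \<and>
        (\<forall>i. 0 < P $ i) \<and>
        (\<forall>i. P $ i * F i (Q $ i, E $ i, L $ i) - (\<Sum>j\<in>UNIV. P $ j * Q $ i $ j) > 0))"

definition unbounded_external_supply :: "('n \<Rightarrow> real \<Rightarrow> real) \<Rightarrow> bool" where
  "unbounded_external_supply D \<longleftrightarrow> (\<forall>i. filterlim (D i) at_bot at_top)"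

definition competitive_equilibrium ::
  "('n::finite \<Rightarrow> 'n input \<Rightarrow> real) \<Rightarrow> ('n \<Rightarrow> real \<Rightarrow> real) \<Rightarrow> ('n \<Rightarrow> real \<Rightarrow> real)
     \<Rightarrow> real \<Rightarrow> real^'n \<Rightarrow> real^'n^'n \<Rightarrow> real^'n \<Rightarrow> real^'n \<Rightarrow> bool" where
  "competitive_equilibrium F W D PE P Q E L \<longleftrightarrow>
     (\<forall>i. 0 \<le> P $ i) \<and> (\<forall>i j. 0 \<le> Q $ i $ j) \<and> (\<forall>i. 0 \<le> E $ i) \<and> (\<forall>i. 0 \<le> L $ i) \<and>
     (\<forall>i. F i (Q $ i, E $ i, L $ i) = D i (P $ i) + (\<Sum>j\<in>UNIV. Q $ j $ i)) \<and>
     (\<forall>i. \<forall>q E' L'. (q, E', L') \<in> input_dom \<longrightarrow>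
          profit F W i P PE q E' L' \<le> profit F W i P PE (Q $ i) (E $ i) (L $ i))"

end

theory Submission
  imports Defs
begin

lemma usc_seq:
  assumes "usc_on S f" "\<And>n. x n \<in> S" "x \<longlonglongrightarrow> l" "l \<in> S" "0 < e"
  shows "eventually (\<lambda>n. f (x n) < f l + e) sequentially"
proof -
  have "openin (top_of_set S) {y \<in> S. f y < f l + e}" using assms(1) by (simp add: usc_on_def)
  then obtain U where U: "open U" "{y \<in> S. f y < f l + e} = S \<inter> U" unfolding openin_open by blast
  have "l \<in> {y \<in> S. f y < f l + e}" using assms(4,5) by simp
  then have "l \<in> U" using U(2) by simp
  then have "eventually (\<lambda>n. x n \<in> U) sequentially" by (rule topological_tendstoD[OF assms(3) U(1)])
  then show ?thesis
  proof (rule eventually_mono)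
    fix n assume "x n \<in> U" then have "x n \<in> S \<inter> U" using assms(2) by simp
    then have "x n \<in> {y \<in> S. f y < f l + e}" using U(2) by simp
    then show "f (x n) < f l + e" by simp
  qed
qed
lemma lsc_seq:
  assumes "lsc_on S f" "\<And>n. x n \<in> S" "x \<longlonglongrightarrow> l" "l \<in> S" "0 < e"
  shows "eventually (\<lambda>n. f l - e < f (x n)) sequentially"
proof -
  have "openin (top_of_set S) {y \<in> S. f l - e < f y}" using assms(1) by (simp add: lsc_on_def)
  then obtain U where U: "open U" "{y \<in> S. f l - e < f y} = S \<inter> U" unfolding openin_open by blast
  have "l \<in> {y \<in> S. f l - e < f y}" using assms(4,5) by simp
  then have "l \<in> U" using U(2) by simp
  then have "eventually (\<lambda>n. x n \<in> U) sequentially" by (rule topological_tendstoD[OF assms(3) U(1)])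
  then show ?thesis
  proof (rule eventually_mono)
    fix n assume "x n \<in> U" then have "x n \<in> S \<inter> U" using assms(2) by simp
    then have "x n \<in> {y \<in> S. f l - e < f y}" using U(2) by simp
    then show "f l - e < f (x n)" by simp
  qed
qed
lemma dom_iff: "(q,E,L) \<in> input_dom \<longleftrightarrow> (\<forall>j. 0 \<le> q$j) \<and> 0 \<le> E \<and> 0 \<le> L"
  by (simp add: input_dom_def)

lemma dom_zero: "(0, 0, 0) \<in> input_dom"
  by (simp add: input_dom_def)

lemma norm_input_le:
  assumes "(q,E,L) \<in> input_dom"
  shows "norm (q,E,L) \<le> (\<Sum>j\<in>UNIV. q$j) + E + L"
proof -
  have "norm (q,E,L) \<le> norm q + norm (E,L)" by (rule norm_Pair_le)
  also have "norm (E,L) \<le> norm E + norm L" by (rule norm_Pair_le)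
  also have "norm q \<le> (\<Sum>j\<in>UNIV. \<bar>q$j\<bar>)" by (rule norm_le_l1_cart)
  also have "(\<Sum>j\<in>UNIV. \<bar>q$j\<bar>) = (\<Sum>j\<in>UNIV. q$j)" using assms by (simp add: dom_iff)
  finally show ?thesis using assms by (simp add: dom_iff)
qed

lemma comp_le_norm:
  fixes q :: "real^'n::finite"
  shows "\<bar>q$j\<bar> \<le> norm (q,E,L)" "\<bar>E\<bar> \<le> norm (q,E,L)" "\<bar>L\<bar> \<le> norm (q,E,L)"
proof -
  have "\<bar>q$j\<bar> \<le> norm q" by (rule component_le_norm_cart)
  also have "norm q \<le> norm (q,E,L)" by (rule norm_fst_le)
  finally show "\<bar>q$j\<bar> \<le> norm (q,E,L)" .
  have "\<bar>E\<bar> \<le> norm (E,L)" using norm_fst_le[of E L] by simp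
  also have "norm (E,L) \<le> norm (q,E,L)" using norm_snd_le[of "(E,L)" q] by simp
  finally show "\<bar>E\<bar> \<le> norm (q,E,L)" .
  have "\<bar>L\<bar> \<le> norm (E,L)" using norm_snd_le[of L E] by simp
  also have "norm (E,L) \<le> norm (q,E,L)" using norm_snd_le[of "(E,L)" q] by simp
  finally show "\<bar>L\<bar> \<le> norm (q,E,L)" .
qed


locale econ =
  fixes F :: "'n::finite \<Rightarrow> 'n input \<Rightarrow> real"
    and W :: "'n \<Rightarrow> real \<Rightarrow> real"
    and D :: "'n \<Rightarrow> real \<Rightarrow> real"
    and PE :: real
  assumes PE_pos: "0 < PE"
    and F_nonneg: "\<And>i x. x \<in> input_dom \<Longrightarrow> 0 \<le> F i x"
    and W_pos: "\<And>i L. 0 \<le> L \<Longrightarrow> 0 < W i L"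
    and prod_labor: "\<And>i. (prod_assm_a (F i) \<and> labor_assm (W i)) \<or>
                         (prod_assm_b (F i) \<and> labor_assm (W i) \<and> growth_assm (W i))"
    and demand: "\<And>i. demand_assm (D i)"
begin

definition obj :: "'n \<Rightarrow> real^'n \<Rightarrow> 'n input \<Rightarrow> real" where
  "obj i P x = profit F W i P PE (fst x) (fst (snd x)) (snd (snd x))"

lemma obj_eq: "obj i P (q,E,L) = P$i * F i (q,E,L) - (\<Sum>j\<in>UNIV. P$j * q$j) - PE * E - W i L"
  by (simp add: obj_def profit_def)

lemma labor: "labor_assm (W i)" using prod_labor[of i] by (elim disjE conjE)

lemma prodc: "prod_common (F i)"
proof -
  have "prod_assm_a (F i) \<or> prod_assm_b (F i)" using prod_labor[of i] by (elim disjE conjE) simp_all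
  then show ?thesis unfolding prod_assm_a_def prod_assm_b_def by (elim disjE conjE)
qed

lemma F_mono: "x \<in> input_dom \<Longrightarrow> y \<in> input_dom \<Longrightarrow> input_le x y \<Longrightarrow> F i x \<le> F i y"
  using prodc[of i] unfolding prod_common_def by (elim conjE) simp

lemma F_usc: "usc_on input_dom (F i)" using prodc[of i] unfolding prod_common_def by (elim conjE)

lemma F_concave: "concave_on input_dom (F i)" using prodc[of i] unfolding prod_common_def by (elim conjE)

lemma W_strict: "0 \<le> x \<Longrightarrow> x < y \<Longrightarrow> W i x < W i y"
  using labor[of i] unfolding labor_assm_def strict_mono_on_def by simp

lemma W_mono: "0 \<le> x \<Longrightarrow> x \<le> y \<Longrightarrow> W i x \<le> W i y"
  using W_strict[of x y i] by (cases "x = y") simp_all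

lemma W_convex: "convex_on {0..} (W i)" using labor[of i] unfolding labor_assm_def by (elim conjE)

lemma W_lsc: "lsc_on {0..} (W i)" using labor[of i] unfolding labor_assm_def by (elim conjE)

lemma W_lin: "\<exists>m>0. \<forall>L\<ge>0. W i 0 + m * L - m \<le> W i L"
proof -
  define m where "m = W i 1 - W i 0"
  have m: "m > 0" using W_strict[of 0 1 i] by (simp add: m_def)
  have "W i 0 + m * L - m \<le> W i L" if L: "L \<ge> 0" for L
  proof (cases "L \<ge> 1")
    case True
    have "W i ((1 - 1/L) *\<^sub>R 0 + (1/L) *\<^sub>R L) \<le> (1 - 1/L) * W i 0 + (1/L) * W i L"
      using True by (intro convex_onD[OF W_convex]) simp_all
    moreover have "(1 - 1/L) *\<^sub>R 0 + (1/L) *\<^sub>R L = (1::real)" using True by simp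
    ultimately have "W i 1 \<le> (1 - 1/L) * W i 0 + (1/L) * W i L" by simp
    then have "L * W i 1 \<le> L * ((1 - 1/L) * W i 0 + (1/L) * W i L)"
      using True by (intro mult_left_mono) simp_all
    also have "\<dots> = (L - 1) * W i 0 + W i L" using True by (simp add: field_simps)
    finally show ?thesis using m by (simp add: m_def algebra_simps)
  next
    case False
    then have "m * L - m \<le> 0" using m L by (simp add: mult_le_cancel_left1 algebra_simps)
    then show ?thesis using W_mono[OF order_refl L, of i] by linarith
  qed
  then show ?thesis using m by blast
qed

end

context econ begin

lemma F_bound_a:
  assumes "prod_assm_a (F i)" "0 < e"
  shows "\<exists>C. \<forall>x\<in>input_dom. F i x \<le> e * norm x + C"
proof -
  have "\<exists>R. \<forall>x\<in>input_dom. R \<le> norm x \<longrightarrow> \<bar>F i x\<bar> \<le> e * norm x"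
    using assms unfolding prod_assm_a_def by simp
  then obtain R where R: "\<forall>x\<in>input_dom. R \<le> norm x \<longrightarrow> \<bar>F i x\<bar> \<le> e * norm x"
    by (elim exE)
  define R' where "R' = max R 0"
  define top where "top = ((\<chi> j. R') :: real^'n, R', R')"
  have top: "top \<in> input_dom" by (simp add: top_def input_dom_def R'_def)
  have "F i x \<le> e * norm x + F i top" if x: "x \<in> input_dom" for x
  proof (cases "R \<le> norm x")
    case True
    then have "\<bar>F i x\<bar> \<le> e * norm x" using R x by simp
    moreover have "0 \<le> F i top" using F_nonneg top by simp
    ultimately show ?thesis by linarith
  next
    case False
    obtain q E L where xe: "x = (q,E,L)" by (cases x) simp
    have "\<bar>q$j\<bar> \<le> norm x" for j unfolding xe by (rule comp_le_norm)
    moreover have "\<bar>E\<bar> \<le> norm x" "\<bar>L\<bar> \<le> norm x" unfolding xe by (rule comp_le_norm)+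
    ultimately have "input_le x top" using False unfolding input_le_def top_def xe R'_def
      by (simp add: abs_le_iff) (smt (verit))
    then have "F i x \<le> F i top" by (rule F_mono[OF x top])
    moreover have "0 \<le> e * norm x" using assms by simp
    ultimately show ?thesis by linarith
  qed
  then show ?thesis by blast
qed

lemma obj_upper:
  assumes "(q,E,L) \<in> input_dom" "\<forall>k. a \<le> P$k \<and> P$k \<le> B"
  shows "obj i P (q,E,L) \<le> B * F i (q,E,L) - a * (\<Sum>j\<in>UNIV. q$j) - PE * E - W i L"
proof -
  have F0: "0 \<le> F i (q,E,L)" using F_nonneg assms(1) by simp
  have "P$i * F i (q,E,L) \<le> B * F i (q,E,L)" using assms(2) F0 by (intro mult_right_mono) simp_all
  moreover have "a * (\<Sum>j\<in>UNIV. q$j) \<le> (\<Sum>j\<in>UNIV. P$j * q$j)"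
    unfolding sum_distrib_left
  proof (rule sum_mono)
    fix j show "a * q $ j \<le> P $ j * q $ j" using assms by (intro mult_right_mono) (simp_all add: dom_iff)
  qed
  ultimately show ?thesis unfolding obj_eq by linarith
qed

lemma coercive:
  assumes a: "0 < a" "a \<le> B"
  shows "\<exists>R>0. \<forall>P x. (\<forall>k. a \<le> P$k \<and> P$k \<le> B) \<longrightarrow> x \<in> input_dom \<longrightarrow> R \<le> norm x \<longrightarrow> obj i P x < - W i 0"
proof (cases "prod_assm_a (F i)")
  case True
  obtain m where m: "m > 0" "\<And>L. L \<ge> 0 \<Longrightarrow> W i 0 + m * L - m \<le> W i L" using W_lin[of i] by blast
  define c1 where "c1 = min (min a PE) m"
  have c1: "c1 > 0" "c1 \<le> a" "c1 \<le> PE" "c1 \<le> m" using m a PE_pos by (simp_all add: c1_def)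
  have B: "B > 0" using a by simp
  define e where "e = c1 / (2*B)"
  have e: "e > 0" using c1 B by (simp add: e_def)
  obtain C where C: "\<And>x. x \<in> input_dom \<Longrightarrow> F i x \<le> e * norm x + C" using F_bound_a[OF True e] by blast
  define R where "R = 2*(B*\<bar>C\<bar> + m)/c1 + 1"
  have "0 \<le> (2*(B*\<bar>C\<bar> + m))/c1" using c1 m B by (simp add: zero_le_divide_iff)
  then have R: "R > 0" by (simp add: R_def)
  have "obj i P x < - W i 0" if P: "\<forall>k. a \<le> P$k \<and> P$k \<le> B" and x: "x \<in> input_dom" and n: "R \<le> norm x" for P x
  proof -
    obtain q E L where xe: "x = (q,E,L)" by (cases x) simp
    have d: "(q,E,L) \<in> input_dom" using x xe by simp
    have qE: "0 \<le> (\<Sum>j\<in>UNIV. q$j)" "0 \<le> E" "0 \<le> L" using d by (simp_all add: dom_iff sum_nonneg)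
    have o1: "obj i P x \<le> B * F i x - a * (\<Sum>j\<in>UNIV. q$j) - PE * E - W i L"
      using obj_upper[OF d P] xe by simp
    have "B * F i x \<le> B * (e * norm x + C)" using C[OF x] B by (intro mult_left_mono) simp_all
    also have "\<dots> = (c1/2) * norm x + B * C" using B by (simp add: e_def field_simps)
    finally have o2: "B * F i x \<le> (c1/2) * norm x + B * \<bar>C\<bar>" using B
      by (smt (verit) abs_ge_self mult_left_mono)
    have o3: "c1 * (\<Sum>j\<in>UNIV. q$j) \<le> a * (\<Sum>j\<in>UNIV. q$j)" using c1 qE by (intro mult_right_mono) simp_all
    have o4: "c1 * E \<le> PE * E" using c1 qE by (intro mult_right_mono) simp_all
    have o5: "c1 * L \<le> m * L" using c1 qE by (intro mult_right_mono) simp_all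
    have o6: "norm x \<le> (\<Sum>j\<in>UNIV. q$j) + E + L" using norm_input_le[OF d] xe by simp
    have "obj i P x \<le> (c1/2) * norm x + B * \<bar>C\<bar> - c1 * ((\<Sum>j\<in>UNIV. q$j) + E + L) - W i 0 + m"
      using o1 o2 o3 o4 o5 m(2)[OF qE(3)] by (simp add: algebra_simps)
    also have "\<dots> \<le> (c1/2) * norm x + B * \<bar>C\<bar> - c1 * norm x - W i 0 + m"
      using o6 c1 by (smt (verit) mult_left_mono)
    also have "\<dots> < - W i 0"
    proof -
      have "c1 * R \<le> c1 * norm x" using n c1 by simp
      moreover have "c1 * R = 2*(B*\<bar>C\<bar> + m) + c1" using c1 by (simp add: R_def field_simps)
      ultimately show ?thesis using c1 by simp
    qed
    finally show ?thesis .
  qed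
  then show ?thesis using R by blast
next
  case False
  then have pb: "prod_assm_b (F i)" and gr: "growth_assm (W i)" using prod_labor[of i] by blast+
  obtain C where C: "\<And>q E L. (q, E, L) \<in> input_dom \<Longrightarrow> F i (q, E, L) \<le> C * L"
    using pb unfolding prod_assm_b_def by blast
  define C' where "C' = max C 0"
  have C': "C' \<ge> 0" by (simp add: C'_def)
  have FC: "F i (q, E, L) \<le> C' * L" if "(q, E, L) \<in> input_dom" for q E L
  proof -
    have "C * L \<le> C' * L" using that by (intro mult_right_mono) (simp_all add: C'_def dom_iff)
    then show ?thesis using C[OF that] by simp
  qed
  have B: "B > 0" using a by simp
  have "eventually (\<lambda>L. B*C' + 1 \<le> W i L / L) at_top"
    using gr unfolding growth_assm_def filterlim_at_top by blast
  then obtain L0 where L0: "\<And>L. L \<ge> L0 \<Longrightarrow> B*C' + 1 \<le> W i L / L"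
    unfolding eventually_at_top_linorder by blast
  define L1 where "L1 = max (max L0 1) (W i 0 + 1)"
  have L1: "L1 \<ge> L0" "L1 \<ge> 1" "L1 \<ge> W i 0 + 1" by (simp_all add: L1_def)
  define c0 where "c0 = min a PE"
  have c0: "c0 > 0" "c0 \<le> a" "c0 \<le> PE" using a PE_pos by (simp_all add: c0_def)
  define R where "R = L1 + B*C'*L1/c0 + 1"
  have "0 \<le> B*C'*L1/c0" using L1 B C' c0 by (simp add: zero_le_divide_iff)
  then have R: "R > 0" using L1 by (simp add: R_def)
  have "obj i P x < - W i 0" if P: "\<forall>k. a \<le> P$k \<and> P$k \<le> B" and x: "x \<in> input_dom" and n: "R \<le> norm x" for P x
  proof -
    obtain q E L where xe: "x = (q,E,L)" by (cases x) simp
    have d: "(q,E,L) \<in> input_dom" using x xe by simp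
    have qE: "0 \<le> (\<Sum>j\<in>UNIV. q$j)" "0 \<le> E" "0 \<le> L" using d by (simp_all add: dom_iff sum_nonneg)
    have o1: "obj i P x \<le> B * F i x - a * (\<Sum>j\<in>UNIV. q$j) - PE * E - W i L"
      using obj_upper[OF d P] xe by simp
    have o2: "B * F i x \<le> B * (C' * L)" using FC[OF d] xe B by (intro mult_left_mono) simp_all
    have o3: "0 \<le> a * (\<Sum>j\<in>UNIV. q$j)" "0 \<le> PE * E" using a qE PE_pos by simp_all
    show ?thesis
    proof (cases "L \<ge> L1")
      case True
      have "B*C' + 1 \<le> W i L / L" using L0 True L1 by simp
      then have "(B*C' + 1) * L \<le> W i L" using True L1 by (simp add: pos_le_divide_eq)
      then have "obj i P x \<le> - L" using o1 o2 o3 by (simp add: algebra_simps)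
      then show ?thesis using True L1 by simp
    next
      case False
      have "B * (C' * L) \<le> B * (C' * L1)" using False B C' qE by (intro mult_left_mono) simp_all
      moreover have "W i 0 \<le> W i L" using W_mono[OF order_refl qE(3)] .
      moreover have o4: "c0 * (\<Sum>j\<in>UNIV. q$j) \<le> a * (\<Sum>j\<in>UNIV. q$j)" using c0 qE by (intro mult_right_mono) simp_all
      moreover have o5: "c0 * E \<le> PE * E" using c0 qE by (intro mult_right_mono) simp_all
      ultimately have "obj i P x \<le> B*C'*L1 - c0 * ((\<Sum>j\<in>UNIV. q$j) + E) - W i 0"
        using o1 o2 by (simp add: algebra_simps)
      moreover have "norm x \<le> (\<Sum>j\<in>UNIV. q$j) + E + L" using norm_input_le[OF d] xe by simp
      then have "R - L1 \<le> (\<Sum>j\<in>UNIV. q$j) + E" using n False by simp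
      then have "c0 * (R - L1) \<le> c0 * ((\<Sum>j\<in>UNIV. q$j) + E)" using c0 by simp
      moreover have "c0 * (R - L1) = B*C'*L1 + c0" using c0 by (simp add: R_def field_simps)
      ultimately show ?thesis using c0 by simp
    qed
  qed
  then show ?thesis using R by blast
qed

end

lemma prod_usc_real:
  fixes a b :: "nat \<Rightarrow> real"
  assumes a: "a \<longlonglongrightarrow> a0" "0 < a0" and b0: "0 \<le> b0"
    and b: "\<And>\<delta>. \<delta> > 0 \<Longrightarrow> eventually (\<lambda>n. b n < b0 + \<delta>) sequentially" "\<And>n. 0 \<le> b n"
    and e: "e > 0"
  shows "eventually (\<lambda>n. a n * b n < a0 * b0 + e) sequentially"
proof -
  define \<delta> where "\<delta> = min 1 (e/(3*(a0+1)))"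
  define \<eta> where "\<eta> = e/(3*(b0+2))"
  have d: "\<delta> > 0" "\<delta> \<le> 1" "\<delta> \<le> e/(3*(a0+1))" using e a b0 by (simp_all add: \<delta>_def)
  have et: "\<eta> > 0" using e b0 by (simp add: \<eta>_def)
  have e1: "eventually (\<lambda>n. a n < a0 + \<eta>) sequentially" using order_tendstoD(2)[OF a(1), of "a0+\<eta>"] et by simp
  have e2: "eventually (\<lambda>n. 0 < a n) sequentially" using order_tendstoD(1)[OF a(1), of 0] a(2) by simp
  have ev: "eventually (\<lambda>n. a n < a0 + \<eta> \<and> 0 < a n \<and> b n < b0 + \<delta>) sequentially"
    using e1 e2 b(1)[OF d(1)] by (intro eventually_conj)
  have k1: "a0 * \<delta> < e/3"
  proof -
    have "a0 * \<delta> \<le> a0 * (e/(3*(a0+1)))" using d a(2) by (intro mult_left_mono) simp_all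
    also have "\<dots> < e/3" using a(2) e by (simp add: field_simps)
    finally show ?thesis .
  qed
  have k2: "\<eta> * b0 < e/3"
  proof -
    have "0 \<le> b0*(e*3)" using e b0 by simp
    then have "0 < e*3 + b0*(e*3)" using e by linarith
    then show ?thesis using e b0 by (simp add: \<eta>_def field_simps)
  qed
  have k3: "\<eta> * \<delta> < e/3"
  proof -
    have "\<eta> * \<delta> \<le> \<eta>" using et d by (simp add: mult_le_cancel_left1)
    also have "\<eta> < e/3"
    proof -
      have "0 \<le> b0*(e*3)" using e b0 by simp
      then have "0 < e*3 + b0*(e*3)" using e by linarith
      then show ?thesis using e b0 by (simp add: \<eta>_def field_simps)
    qed
    finally show ?thesis .
  qed
  show ?thesis using ev
  proof (rule eventually_mono)
    fix n assume h: "a n < a0 + \<eta> \<and> 0 < a n \<and> b n < b0 + \<delta>"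
    have "a n * b n \<le> a n * (b0 + \<delta>)" using h by (intro mult_left_mono) simp_all
    also have "\<dots> \<le> (a0 + \<eta>) * (b0 + \<delta>)" using h d b0 by (intro mult_right_mono) simp_all
    also have "\<dots> = a0 * b0 + a0 * \<delta> + \<eta> * b0 + \<eta> * \<delta>" by (simp add: algebra_simps)
    finally show "a n * b n < a0 * b0 + e" using k1 k2 k3 by simp
  qed
qed

lemma usc_attains_max:
  fixes g :: "'a::metric_space \<Rightarrow> real"
  assumes T: "compact T" "T \<noteq> {}"
    and usc: "\<And>x xb e. (\<And>n. x n \<in> T) \<Longrightarrow> x \<longlonglongrightarrow> xb \<Longrightarrow> xb \<in> T \<Longrightarrow> e > 0 \<Longrightarrow>
                 eventually (\<lambda>n. g (x n) < g xb + e) sequentially"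
  shows "\<exists>x\<in>T. \<forall>y\<in>T. g y \<le> g x"
proof -
  have sc: "seq_compact T" using T(1) by (rule compact_imp_seq_compact)
  have bdd: "bdd_above (g ` T)"
  proof (rule ccontr)
    assume nb: "\<not> bdd_above (g ` T)"
    have "\<forall>n::nat. \<exists>x\<in>T. real n < g x"
    proof
      fix n :: nat
      show "\<exists>x\<in>T. real n < g x"
      proof (rule ccontr)
        assume "\<not> (\<exists>x\<in>T. real n < g x)"
        then have "\<forall>y\<in>g ` T. y \<le> real n" by (auto simp: not_less)
        then show False using nb unfolding bdd_above_def by blast
      qed
    qed
    then obtain x where x: "\<And>n. x n \<in> T" "\<And>n. real n < g (x n)" by metis
    obtain xb r where r: "xb \<in> T" "strict_mono r" "(x \<circ> r) \<longlonglongrightarrow> xb"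
      using sc x(1) unfolding seq_compact_def by meson
    have "eventually (\<lambda>n. g ((x \<circ> r) n) < g xb + 1) sequentially"
      using usc[of "x \<circ> r" xb 1] r x(1) by simp
    moreover have "eventually (\<lambda>n. g xb + 1 \<le> real n) sequentially"
    proof -
      obtain N :: nat where N: "g xb + 1 \<le> real N" using real_arch_simple by blast
      show ?thesis unfolding eventually_sequentially
        by (intro exI[of _ N]) (auto intro: order_trans[OF N])
    qed
    ultimately have "eventually (\<lambda>n. False) sequentially"
    proof (rule eventually_elim2)
      fix n assume "g ((x \<circ> r) n) < g xb + 1" "g xb + 1 \<le> real n"
      moreover have "real n \<le> real (r n)" using seq_suble[OF r(2)] by simp
      moreover have "real (r n) < g (x (r n))" using x(2) by simp
      ultimately show False by simp
    qed
    then show False by simp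
  qed
  define M where "M = Sup (g ` T)"
  have up: "\<And>y. y \<in> T \<Longrightarrow> g y \<le> M" unfolding M_def using bdd by (simp add: cSup_upper)
  have "\<forall>n::nat. \<exists>x\<in>T. M - 1/(real n + 1) < g x"
  proof
    fix n :: nat
    have "M - 1/(real n + 1) < M" by simp
    then show "\<exists>x\<in>T. M - 1/(real n + 1) < g x"
      unfolding M_def using less_cSup_iff[of "g ` T"] bdd T(2) by simp
  qed
  then obtain x where x: "\<And>n. x n \<in> T" "\<And>n. M - 1/(real n + 1) < g (x n)" by metis
  obtain xb r where r: "xb \<in> T" "strict_mono r" "(x \<circ> r) \<longlonglongrightarrow> xb"
    using sc x(1) unfolding seq_compact_def by meson
  have "M \<le> g xb"
  proof (rule ccontr)
    assume "\<not> M \<le> g xb"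
    define e where "e = (M - g xb)/2"
    have e: "e > 0" using \<open>\<not> M \<le> g xb\<close> by (simp add: e_def)
    have "eventually (\<lambda>n. g ((x \<circ> r) n) < g xb + e) sequentially"
      using usc[of "x \<circ> r" xb e] r x(1) e by simp
    moreover have "eventually (\<lambda>n. 1/(real n + 1) < e) sequentially"
    proof -
      obtain N :: nat where N: "1/e < real N" using reals_Archimedean2 by blast
      have "1/(real n + 1) < e" if "n \<ge> N" for n
      proof -
        have "1/e < real n + 1" using N that by simp
        then show ?thesis using e by (simp add: field_simps)
      qed
      then show ?thesis by (auto simp: eventually_sequentially)
    qed
    ultimately have "eventually (\<lambda>n. False) sequentially"
    proof (rule eventually_elim2)
      fix n assume h: "g ((x \<circ> r) n) < g xb + e" "1/(real n + 1) < e"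
      have "real n \<le> real (r n)" using seq_suble[OF r(2)] by simp
      then have "1/(real (r n) + 1) \<le> 1/(real n + 1)" by (simp add: frac_le)
      moreover have "M - 1/(real (r n) + 1) < g (x (r n))" using x(2) by simp
      moreover have "M - g xb = 2*e" by (simp add: e_def)
      moreover have "g (x (r n)) < g xb + e" using h(1) by simp
      ultimately show False using h(2) by linarith
    qed
    then show False by simp
  qed
  then show ?thesis using up r(1) by force
qed

lemma closed_input_dom: "closed (input_dom :: 'n::finite input set)"
proof -
  have "input_dom = {x::'n input. \<forall>j. 0 \<le> fst x $ j} \<inter> {x. 0 \<le> fst (snd x)} \<inter> {x. 0 \<le> snd (snd x)}"
    by (auto simp: input_dom_def)
  moreover have "closed {x::'n input. \<forall>j. 0 \<le> fst x $ j}"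
    by (intro closed_Collect_all closed_Collect_le continuous_intros)
  moreover have "closed {x::'n input. 0 \<le> fst (snd x)}"
    by (intro closed_Collect_le continuous_intros)
  moreover have "closed {x::'n input. 0 \<le> snd (snd x)}"
    by (intro closed_Collect_le continuous_intros)
  ultimately show ?thesis by (metis closed_Int)
qed

lemma convex_input_dom: "convex (input_dom :: 'n::finite input set)"
  unfolding convex_def input_dom_def by (auto intro!: add_nonneg_nonneg mult_nonneg_nonneg)

context econ begin

definition lin :: "real^'n \<Rightarrow> 'n input \<Rightarrow> real" where
  "lin P x = (\<Sum>j\<in>UNIV. P$j * fst x $ j) + PE * fst (snd x)"

lemma obj_alt: "obj i P x = P$i * F i x - lin P x - W i (snd (snd x))"
  by (simp add: obj_def profit_def lin_def)

lemma lin_tendsto: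
  assumes "Pn \<longlonglongrightarrow> P" "x \<longlonglongrightarrow> xb"
  shows "(\<lambda>n. lin (Pn n) (x n)) \<longlonglongrightarrow> lin P xb"
  unfolding lin_def using assms by (intro tendsto_intros)

lemma obj_tendsto_P:
  assumes "Pn \<longlonglongrightarrow> P"
  shows "(\<lambda>n. obj i (Pn n) y) \<longlonglongrightarrow> obj i P y"
  unfolding obj_alt using assms by (intro tendsto_intros lin_tendsto) simp_all

lemma dom_L: "x \<in> input_dom \<Longrightarrow> snd (snd x) \<in> {0..}"
  by (cases x) (simp add: dom_iff)

lemma cost_lsc:
  assumes "Pn \<longlonglongrightarrow> P" "\<And>n. x n \<in> input_dom" "x \<longlonglongrightarrow> xb" "xb \<in> input_dom" "0 < e"
  shows "eventually (\<lambda>n. lin P xb + W i (snd (snd xb)) - e < lin (Pn n) (x n) + W i (snd (snd (x n)))) sequentially"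
proof -
  have "eventually (\<lambda>n. lin P xb - e/2 < lin (Pn n) (x n)) sequentially"
    using order_tendstoD(1)[OF lin_tendsto[OF assms(1,3)], of "lin P xb - e/2"] assms(5) by simp
  moreover have "eventually (\<lambda>n. W i (snd (snd xb)) - e/2 < W i (snd (snd (x n)))) sequentially"
  proof (rule lsc_seq[OF W_lsc])
    show "\<And>n. snd (snd (x n)) \<in> {0..}" using assms(2) dom_L by blast
    show "(\<lambda>n. snd (snd (x n))) \<longlonglongrightarrow> snd (snd xb)" using assms(3) by (intro tendsto_intros)
    show "snd (snd xb) \<in> {0..}" using assms(4) dom_L by blast
    show "0 < e/2" using assms(5) by simp
  qed
  ultimately show ?thesis by (rule eventually_elim2) simp
qed

lemma obj_usc_seq:
  assumes "Pn \<longlonglongrightarrow> P" "0 < P$i" "\<And>n. x n \<in> input_dom" "x \<longlonglongrightarrow> xb" "xb \<in> input_dom" "0 < e"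
  shows "eventually (\<lambda>n. obj i (Pn n) (x n) < obj i P xb + e) sequentially"
proof -
  have "eventually (\<lambda>n. (Pn n)$i * F i (x n) < P$i * F i xb + e/2) sequentially"
  proof (rule prod_usc_real)
    show "(\<lambda>n. Pn n $ i) \<longlonglongrightarrow> P $ i" using assms(1) by (intro tendsto_intros)
    show "0 < P$i" by fact
    show "0 \<le> F i xb" using F_nonneg assms(5) by simp
    show "\<And>n. 0 \<le> F i (x n)" using F_nonneg assms(3) by simp
    show "0 < e/2" using assms(6) by simp
    show "\<And>\<delta>. 0 < \<delta> \<Longrightarrow> eventually (\<lambda>n. F i (x n) < F i xb + \<delta>) sequentially"
      using usc_seq[OF F_usc assms(3,4,5)] by blast
  qed
  moreover have "eventually (\<lambda>n. lin P xb + W i (snd (snd xb)) - e/2 < lin (Pn n) (x n) + W i (snd (snd (x n)))) sequentially"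
    using cost_lsc[OF assms(1,3,4,5)] assms(6) by simp
  ultimately show ?thesis unfolding obj_alt by (rule eventually_elim2) simp
qed

lemma argmax_exists:
  assumes P: "\<forall>k. 0 < P$k"
  shows "\<exists>x\<in>input_dom. \<forall>y\<in>input_dom. obj i P y \<le> obj i P x"
proof -
  define a where "a = Min (range (\<lambda>k. P$k))"
  define B where "B = Max (range (\<lambda>k. P$k))"
  have aB: "\<forall>k. a \<le> P$k \<and> P$k \<le> B" by (simp add: a_def B_def)
  have a0: "0 < a" unfolding a_def using P by (subst Min_gr_iff) auto
  have aleB: "a \<le> B" using aB by (meson order_trans)
  obtain R where R: "R > 0" "\<And>x. x \<in> input_dom \<Longrightarrow> R \<le> norm x \<Longrightarrow> obj i P x < - W i 0"
    using coercive[OF a0 aleB, of i] aB by blast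
  define T where "T = cball 0 R \<inter> (input_dom :: 'n input set)"
  have Tc: "compact T" unfolding T_def by (intro compact_Int_closed compact_cball closed_input_dom)
  have z: "(0,0,0) \<in> T" using R dom_zero by (simp add: T_def)
  have "\<exists>x\<in>T. \<forall>y\<in>T. obj i P y \<le> obj i P x"
  proof (rule usc_attains_max[OF Tc])
    show "T \<noteq> {}" using z by blast
    fix x xb and e :: real
    assume h: "\<And>n. x n \<in> T" "x \<longlonglongrightarrow> xb" "xb \<in> T" "0 < e"
    show "eventually (\<lambda>n. obj i P (x n) < obj i P xb + e) sequentially"
      using obj_usc_seq[of "\<lambda>n. P" P i x xb e] h P by (simp add: T_def)
  qed
  then obtain x where x: "x \<in> T" "\<And>y. y \<in> T \<Longrightarrow> obj i P y \<le> obj i P x" by blast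
  have o0: "- W i 0 \<le> obj i P (0,0,0)"
    using F_nonneg[OF dom_zero, of i] P mult_nonneg_nonneg[of "P$i" "F i (0,0,0)"] by (simp add: obj_eq less_imp_le)
  have "obj i P y \<le> obj i P x" if y: "y \<in> input_dom" for y
  proof (cases "norm y \<le> R")
    case True then show ?thesis using x y by (simp add: T_def)
  next
    case False
    then have "obj i P y < - W i 0" using R y by simp
    then show ?thesis using o0 x(2)[OF z] by simp
  qed
  moreover have "x \<in> input_dom" using x(1) by (simp add: T_def)
  ultimately show ?thesis by blast
qed

end

context econ begin

lemma key:
  assumes Pn: "Pn \<longlonglongrightarrow> P" "\<forall>k. 0 < P$k"
    and x: "\<And>n. x n \<in> input_dom" "x \<longlonglongrightarrow> xb"
    and opt: "\<And>n y. y \<in> input_dom \<Longrightarrow> obj i (Pn n) y \<le> obj i (Pn n) (x n)"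
  shows "xb \<in> input_dom" "\<forall>y\<in>input_dom. obj i P y \<le> obj i P xb" "(\<lambda>n. F i (x n)) \<longlonglongrightarrow> F i xb"
proof -
  show xb: "xb \<in> input_dom"
    using closed_sequentially[OF closed_input_dom, of x xb] x by simp
  have Pi: "0 < P$i" using Pn by simp
  show "\<forall>y\<in>input_dom. obj i P y \<le> obj i P xb"
  proof (rule ballI, rule ccontr)
    fix y assume y: "y \<in> input_dom" and c: "\<not> obj i P y \<le> obj i P xb"
    define e where "e = (obj i P y - obj i P xb)/2"
    have e: "e > 0" using c by (simp add: e_def)
    have "eventually (\<lambda>n. obj i (Pn n) (x n) < obj i P xb + e) sequentially"
      using obj_usc_seq[OF Pn(1) Pi x xb e] .
    moreover have "eventually (\<lambda>n. obj i P y - e < obj i (Pn n) y) sequentially"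
      using order_tendstoD(1)[OF obj_tendsto_P[OF Pn(1)], of "obj i P y - e" i y] e by simp
    ultimately have "eventually (\<lambda>n. False) sequentially"
    proof (rule eventually_elim2)
      fix n assume "obj i (Pn n) (x n) < obj i P xb + e" "obj i P y - e < obj i (Pn n) y"
      moreover have "obj i (Pn n) y \<le> obj i (Pn n) (x n)" using opt y by simp
      moreover have "obj i P y - e = obj i P xb + e" by (simp add: e_def field_simps)
      ultimately show False by simp
    qed
    then show False by simp
  qed
  show "(\<lambda>n. F i (x n)) \<longlonglongrightarrow> F i xb"
  proof (rule order_tendstoI)
    fix c assume "F i xb < c"
    then show "eventually (\<lambda>n. F i (x n) < c) sequentially"
      using usc_seq[OF F_usc[of i] x xb, of "c - F i xb"] by simp
  next
    fix c assume c: "c < F i xb"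
    define \<delta> where "\<delta> = (F i xb - c) * P$i / 4"
    have d: "\<delta> > 0" using c Pi by (simp add: \<delta>_def)
    have e1: "eventually (\<lambda>n. lin P xb + W i (snd (snd xb)) - \<delta> < lin (Pn n) (x n) + W i (snd (snd (x n)))) sequentially"
      using cost_lsc[OF Pn(1) x xb d] .
    have e2: "eventually (\<lambda>n. obj i P xb - \<delta> < obj i (Pn n) xb) sequentially"
      using order_tendstoD(1)[OF obj_tendsto_P[OF Pn(1)], of "obj i P xb - \<delta>" i xb] d by simp
    have e3: "eventually (\<lambda>n. F i (x n) < F i xb + 1) sequentially"
      using usc_seq[OF F_usc[of i] x xb, of 1] by simp
    have e4: "eventually (\<lambda>n. \<bar>Pn n $ i - P$i\<bar> * (F i xb + 1) < \<delta>) sequentially"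
    proof -
      have "(\<lambda>n. \<bar>Pn n $ i - P$i\<bar> * (F i xb + 1)) \<longlonglongrightarrow> \<bar>P $ i - P$i\<bar> * (F i xb + 1)"
        using Pn(1) by (intro tendsto_intros)
      then show ?thesis using order_tendstoD(2)[of _ 0 sequentially \<delta>] d by simp
    qed
    have ev: "eventually (\<lambda>n. (lin P xb + W i (snd (snd xb)) - \<delta> < lin (Pn n) (x n) + W i (snd (snd (x n))))
         \<and> (obj i P xb - \<delta> < obj i (Pn n) xb) \<and> F i (x n) < F i xb + 1
         \<and> \<bar>Pn n $ i - P$i\<bar> * (F i xb + 1) < \<delta>) sequentially"
      using e1 e2 e3 e4 by (intro eventually_conj)
    show "eventually (\<lambda>n. c < F i (x n)) sequentially"
      using ev
    proof (rule eventually_mono)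
      fix n assume h: "(lin P xb + W i (snd (snd xb)) - \<delta> < lin (Pn n) (x n) + W i (snd (snd (x n))))
         \<and> (obj i P xb - \<delta> < obj i (Pn n) xb) \<and> F i (x n) < F i xb + 1
         \<and> \<bar>Pn n $ i - P$i\<bar> * (F i xb + 1) < \<delta>"
      have o: "obj i (Pn n) xb \<le> obj i (Pn n) (x n)" using opt xb by simp
      have A: "Pn n $ i * F i (x n) > P$i * F i xb - 2*\<delta>"
        using h o unfolding obj_alt by linarith
      have F0: "0 \<le> F i (x n)" using F_nonneg x(1) by simp
      have "\<bar>(P$i - Pn n $ i) * F i (x n)\<bar> = \<bar>Pn n $ i - P$i\<bar> * F i (x n)"
        using F0 by (simp add: abs_mult abs_minus_commute)
      also have "\<dots> \<le> \<bar>Pn n $ i - P$i\<bar> * (F i xb + 1)"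
        using h by (intro mult_left_mono) simp_all
      finally have B: "- \<delta> < (P$i - Pn n $ i) * F i (x n)" using h by linarith
      have "P$i * F i (x n) = Pn n $ i * F i (x n) + (P$i - Pn n $ i) * F i (x n)"
        by (simp add: algebra_simps)
      then have "P$i * F i (x n) > P$i * F i xb - 3*\<delta>"
        using A B by linarith
      moreover have "3*\<delta> < (F i xb - c) * P$i" using d by (simp add: \<delta>_def mult.commute)
      moreover have "(F i xb - c) * P$i = P$i * F i xb - P$i * c" by (simp add: algebra_simps)
      ultimately have "P$i * F i (x n) > P$i * c" by linarith
      then show "c < F i (x n)" using Pi by simp
    qed
  qed
qed

end

context econ begin

lemma D_dec: "0 < x \<Longrightarrow> x < y \<Longrightarrow> D k y < D k x"
  using demand[of k] unfolding demand_assm_def by simp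

lemma D_mono: "0 < x \<Longrightarrow> x \<le> y \<Longrightarrow> D k y \<le> D k x"
  using D_dec[of x y k] by (cases "x = y") simp_all

lemma D_cont: "continuous_on {0<..} (D k)"
  using demand[of k] unfolding demand_assm_def by (elim conjE)

lemma D_zero: "\<exists>\<epsilon>>0. \<forall>p. 0 < p \<and> p < \<epsilon> \<longrightarrow> M < D k p"
proof -
  have "filterlim (D k) at_top (at_right 0)" using demand[of k] unfolding demand_assm_def by (elim conjE)
  then have "eventually (\<lambda>p. M < D k p) (at_right 0)" by (simp add: filterlim_at_top_dense)
  then show ?thesis unfolding eventually_at_right[OF zero_less_one] by blast
qed

lemma D_inf: "\<epsilon> > 0 \<Longrightarrow> \<exists>T. \<forall>p\<ge>T. D k p < \<epsilon>"
proof -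
  assume e: "\<epsilon> > 0"
  have "eventually (\<lambda>P. D k P < \<epsilon>) at_top" using demand[of k] e unfolding demand_assm_def by blast
  then show ?thesis unfolding eventually_at_top_linorder by blast
qed

definition G :: "real \<Rightarrow> 'n \<Rightarrow> real \<Rightarrow> real" where
  "G c k p = integral {c..p} (D k)"

lemma D_integrable: "0 < a \<Longrightarrow> D k integrable_on {a..b}"
  by (rule integrable_continuous_real) (rule continuous_on_subset[OF D_cont], auto)

lemma G_super:
  assumes c: "0 < c" "c \<le> p" "c \<le> q"
  shows "G c k p \<le> G c k q + D k q * (p - q)"
proof (cases "q \<le> p")
  case True
  have "G c k p = G c k q + integral {q..p} (D k)"
    unfolding G_def using Henstock_Kurzweil_Integration.integral_combine[OF c(3) True D_integrable[OF c(1)]] by simp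
  moreover have "integral {q..p} (D k) \<le> integral {q..p} (\<lambda>_. D k q)"
  proof (rule integral_le)
    show "D k integrable_on {q..p}" using c by (intro D_integrable) simp
    show "(\<lambda>_. D k q) integrable_on {q..p}" by (intro integrable_continuous_real continuous_on_const)
    show "\<And>x. x \<in> {q..p} \<Longrightarrow> D k x \<le> D k q" using c by (intro D_mono) auto
  qed
  moreover have "integral {q..p} (\<lambda>_. D k q) = D k q * (p - q)" using True by (simp add: mult.commute)
  ultimately show ?thesis by linarith
next
  case False
  have "G c k q = G c k p + integral {p..q} (D k)"
    unfolding G_def using Henstock_Kurzweil_Integration.integral_combine[OF c(2) _ D_integrable[OF c(1)]] False by simp
  moreover have "integral {p..q} (\<lambda>_. D k q) \<le> integral {p..q} (D k)"
  proof (rule integral_le)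
    show "D k integrable_on {p..q}" using c by (intro D_integrable) simp
    show "(\<lambda>_. D k q) integrable_on {p..q}" by (intro integrable_continuous_real continuous_on_const)
    show "\<And>x. x \<in> {p..q} \<Longrightarrow> D k q \<le> D k x" using c by (intro D_mono) auto
  qed
  moreover have "integral {p..q} (\<lambda>_. D k q) = D k q * (q - p)" using False by (simp add: mult.commute)
  moreover have "D k q * (q - p) = - (D k q * (p - q))" by (simp add: algebra_simps)
  ultimately show ?thesis by linarith
qed

lemma G_cont: "0 < c \<Longrightarrow> continuous_on {c..b} (G c k)"
  unfolding G_def by (rule indefinite_integral_continuous_1) (rule D_integrable)

lemma out_bound:
  "\<exists>Fm. \<forall>P x. 0 < P$k \<and> P$k \<le> 1 \<and> (\<forall>j. P$k \<le> 2 * P$j) \<and> x \<in> input_dom \<and>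
        obj k P (0,0,0) \<le> obj k P x \<longrightarrow> F k x \<le> Fm"
proof (cases "prod_assm_a (F k)")
  case True
  obtain m where m: "m > 0" "\<And>L. L \<ge> 0 \<Longrightarrow> W k 0 + m * L - m \<le> W k L" using W_lin[of k] by blast
  define \<alpha> where "\<alpha> = 2 + 1/PE + 1/m"
  have al: "\<alpha> > 0" using m PE_pos by (simp add: \<alpha>_def add_pos_pos)
  obtain C where C: "\<And>x. x \<in> input_dom \<Longrightarrow> F k x \<le> (1/(2*\<alpha>)) * norm x + C"
    using F_bound_a[OF True, of "1/(2*\<alpha>)"] al by auto
  have "F k x \<le> 1/\<alpha> + 2*C" if h: "0 < P$k" "P$k \<le> 1" "\<forall>j. P$k \<le> 2 * P$j" "x \<in> input_dom"
      "obj k P (0,0,0) \<le> obj k P x" for P x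
  proof -
    obtain q E L where xe: "x = (q,E,L)" by (cases x) simp
    have d: "(q,E,L) \<in> input_dom" using h xe by simp
    have qE: "\<forall>j. 0 \<le> q$j" "0 \<le> E" "0 \<le> L" using d by (simp_all add: dom_iff)
    have F0: "0 \<le> F k x" using F_nonneg h(4) by simp
    have o0: "- W k 0 \<le> obj k P (0,0,0)"
      using F_nonneg[OF dom_zero, of k] h(1) mult_nonneg_nonneg[of "P$k" "F k (0,0,0)"] by (simp add: obj_eq)
    have sq: "(P$k/2) * (\<Sum>j\<in>UNIV. q$j) \<le> (\<Sum>j\<in>UNIV. P$j * q$j)"
      unfolding sum_distrib_left
    proof (rule sum_mono)
      fix j
      have "P$k * q$j \<le> (2*P$j) * q$j" using h(3) qE by (intro mult_right_mono) auto
      then show "P$k/2 * q$j \<le> P$j * q$j" by simp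
    qed
    have pF: "P$k * F k x \<le> F k x" using h(1,2) F0 by (intro mult_left_le_one_le) simp_all
    have W0: "W k 0 \<le> W k L" using W_mono[OF order_refl qE(3)] .
    have main: "(\<Sum>j\<in>UNIV. P$j * q$j) + PE * E + (W k L - W k 0) \<le> P$k * F k x"
      using o0 h(5) xe by (simp add: obj_eq)
    have s0: "0 \<le> (\<Sum>j\<in>UNIV. q$j)" using qE by (simp add: sum_nonneg)
    have pe: "0 \<le> PE * E" using qE PE_pos by simp
    have b1: "(\<Sum>j\<in>UNIV. q$j) \<le> 2 * F k x"
    proof -
      have "(P$k/2) * (\<Sum>j\<in>UNIV. q$j) \<le> P$k * F k x" using sq main pe W0 by linarith
      then have "P$k * ((\<Sum>j\<in>UNIV. q$j)) \<le> P$k * (2 * F k x)" by (simp add: algebra_simps)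
      then show ?thesis using h(1) by simp
    qed
    have b2: "E \<le> F k x / PE"
    proof -
      have "PE * E \<le> F k x" using main pF W0 sq h(1) s0 by (smt (verit) mult_nonneg_nonneg divide_nonneg_pos)
      then show ?thesis using PE_pos by (simp add: field_simps)
    qed
    have b3: "L \<le> F k x / m + 1"
    proof -
      have "m * L - m \<le> F k x" using main pF m(2)[OF qE(3)] sq h(1) s0 pe
        by (smt (verit) mult_nonneg_nonneg divide_nonneg_pos)
      then have "m * L \<le> F k x + m" by simp
      then show ?thesis using m(1) by (simp add: field_simps)
    qed
    have "norm x \<le> (\<Sum>j\<in>UNIV. q$j) + E + L" using norm_input_le[OF d] xe by simp
    also have "\<dots> \<le> 2 * F k x + F k x / PE + (F k x / m + 1)" using b1 b2 b3 by simp
    also have "\<dots> = \<alpha> * F k x + 1" by (simp add: \<alpha>_def algebra_simps)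
    finally have nx: "norm x \<le> \<alpha> * F k x + 1" .
    have "F k x \<le> (1/(2*\<alpha>)) * norm x + C" using C h(4) by simp
    also have "\<dots> \<le> (1/(2*\<alpha>)) * (\<alpha> * F k x + 1) + C" using nx al by (simp add: divide_right_mono)
    also have "\<dots> = F k x / 2 + 1/(2*\<alpha>) + C" using al by (simp add: field_simps)
    finally have "F k x / 2 \<le> 1/(2*\<alpha>) + C" by simp
    then show ?thesis by (simp add: field_simps)
  qed
  then show ?thesis by blast
next
  case False
  then have pb: "prod_assm_b (F k)" and gr: "growth_assm (W k)" using prod_labor[of k] by blast+
  obtain C where C: "\<And>q E L. (q, E, L) \<in> input_dom \<Longrightarrow> F k (q, E, L) \<le> C * L"
    using pb unfolding prod_assm_b_def by blast
  define C' where "C' = max C 0"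
  have C': "C' \<ge> 0" by (simp add: C'_def)
  have FC: "F k (q, E, L) \<le> C' * L" if "(q, E, L) \<in> input_dom" for q E L
  proof -
    have "C * L \<le> C' * L" using that by (intro mult_right_mono) (simp_all add: C'_def dom_iff)
    then show ?thesis using C[OF that] by simp
  qed
  have "eventually (\<lambda>L. C' + 1 \<le> W k L / L) at_top"
    using gr unfolding growth_assm_def filterlim_at_top by blast
  then obtain L0 where L0: "\<And>L. L \<ge> L0 \<Longrightarrow> C' + 1 \<le> W k L / L"
    unfolding eventually_at_top_linorder by blast
  define L1 where "L1 = max (max L0 (W k 0)) 1"
  have "F k x \<le> C' * L1" if h: "0 < P$k" "P$k \<le> 1" "\<forall>j. P$k \<le> 2 * P$j" "x \<in> input_dom"
      "obj k P (0,0,0) \<le> obj k P x" for P x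
  proof -
    obtain q E L where xe: "x = (q,E,L)" by (cases x) simp
    have d: "(q,E,L) \<in> input_dom" using h xe by simp
    have qE: "\<forall>j. 0 \<le> q$j" "0 \<le> E" "0 \<le> L" using d by (simp_all add: dom_iff)
    have F0: "0 \<le> F k x" using F_nonneg h(4) by simp
    have o0: "- W k 0 \<le> obj k P (0,0,0)"
      using F_nonneg[OF dom_zero, of k] h(1) mult_nonneg_nonneg[of "P$k" "F k (0,0,0)"] by (simp add: obj_eq)
    have Pj: "0 \<le> P$j" for j using h(1) h(3) by (smt (verit))
    have sq: "0 \<le> (\<Sum>j\<in>UNIV. P$j * q$j)"
      by (rule sum_nonneg) (use Pj qE in \<open>auto intro!: mult_nonneg_nonneg\<close>)
    have pF: "P$k * F k x \<le> F k x" using h(1,2) F0 by (intro mult_left_le_one_le) simp_all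
    have main: "(\<Sum>j\<in>UNIV. P$j * q$j) + PE * E + (W k L - W k 0) \<le> P$k * F k x"
      using o0 h(5) xe by (simp add: obj_eq)
    have pe: "0 \<le> PE * E" using qE PE_pos by simp
    have FL: "F k x \<le> C' * L" using FC[OF d] xe by simp
    have WL: "W k L \<le> W k 0 + C' * L" using main pF FL sq pe by linarith
    have "L \<le> L1"
    proof (rule ccontr)
      assume "\<not> L \<le> L1"
      then have L: "L > L1" by simp
      then have "L \<ge> L0" "L > 0" "L > W k 0" by (simp_all add: L1_def)
      then have "C' + 1 \<le> W k L / L" using L0 by simp
      then have "(C' + 1) * L \<le> W k L" using \<open>L > 0\<close> by (simp add: pos_le_divide_eq)
      then show False using WL \<open>L > W k 0\<close> by (simp add: algebra_simps)
    qed
    then have "C' * L \<le> C' * L1" using C' by (simp add: mult_left_mono)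
    then show ?thesis using FL by simp
  qed
  then show ?thesis by blast
qed

end

type_synonym 'n alloc = "(real^'n^'n) \<times> (real^'n) \<times> (real^'n)"

definition xi :: "'n::finite alloc \<Rightarrow> 'n \<Rightarrow> 'n input" where
  "xi X i = (fst X $ i, fst (snd X) $ i, snd (snd X) $ i)"

definition pos :: "(real^'n::finite) set" where "pos = {P. \<forall>k. 0 < P$k}"

lemma open_pos: "open pos"
proof -
  have e: "pos = (\<Inter>k\<in>UNIV. {P::real^'a. 0 < P$k})" by (auto simp: pos_def)
  have "open {P::real^'a. 0 < P$k}" for k
    by (rule open_Collect_less) (intro continuous_intros)+
  then have "open (\<Inter>k\<in>UNIV. {P::real^'a. 0 < P$k})" by (intro open_INT) auto
  then show ?thesis using e by simp
qed

lemma convex_pos: "convex pos"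
proof (rule convexI)
  fix x y :: "real^'a" and u v :: real
  assume h: "x \<in> pos" "y \<in> pos" "0 \<le> u" "0 \<le> v" "u + v = 1"
  have "0 < u * x$k + v * y$k" for k
  proof (cases "u = 0")
    case True then show ?thesis using h by (simp add: pos_def)
  next
    case False
    then have "0 < u * x$k" using h by (simp add: pos_def)
    moreover have "0 \<le> v * y$k" using h by (simp add: pos_def less_imp_le)
    ultimately show ?thesis by simp
  qed
  then show "u *\<^sub>R x + v *\<^sub>R y \<in> pos" by (simp add: pos_def)
qed

lemma norm_X_le: "norm (X::'n::finite alloc) \<le> 3 * (\<Sum>i\<in>UNIV. norm (xi X i))"
proof -
  obtain Q E L where X: "X = (Q,E,L)" by (cases X) simp
  have nQ: "norm Q \<le> (\<Sum>i\<in>UNIV. norm (Q$i))"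
    unfolding norm_vec_def by (rule L2_set_le_sum) simp
  have nE: "norm E \<le> (\<Sum>i\<in>UNIV. \<bar>E$i\<bar>)" by (rule norm_le_l1_cart)
  have nL: "norm L \<le> (\<Sum>i\<in>UNIV. \<bar>L$i\<bar>)" by (rule norm_le_l1_cart)
  have c1: "norm (Q$i) \<le> norm (xi X i)" for i unfolding xi_def X by (simp add: norm_fst_le)
  have c2: "\<bar>E$i\<bar> \<le> norm (xi X i)" for i unfolding xi_def X using comp_le_norm(2) by simp
  have c3: "\<bar>L$i\<bar> \<le> norm (xi X i)" for i unfolding xi_def X using comp_le_norm(3) by simp
  have "norm X \<le> norm Q + norm (E,L)" unfolding X by (rule norm_Pair_le)
  also have "norm (E,L) \<le> norm E + norm L" by (rule norm_Pair_le)
  finally have "norm X \<le> norm Q + norm E + norm L" by simp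
  also have "\<dots> \<le> (\<Sum>i\<in>UNIV. norm (xi X i)) + (\<Sum>i\<in>UNIV. norm (xi X i)) + (\<Sum>i\<in>UNIV. norm (xi X i))"
    using nQ nE nL sum_mono[of UNIV "\<lambda>i. norm (Q$i)", OF c1] sum_mono[of UNIV "\<lambda>i. \<bar>E$i\<bar>", OF c2]
      sum_mono[of UNIV "\<lambda>i. \<bar>L$i\<bar>", OF c3] by linarith
  finally show ?thesis by simp
qed

lemma xi_tendsto: "Xn \<longlonglongrightarrow> X \<Longrightarrow> (\<lambda>n. xi (Xn n) i) \<longlonglongrightarrow> xi X i"
  unfolding xi_def by (intro tendsto_intros)

lemma xi_comb: "xi (u *\<^sub>R X + v *\<^sub>R Y) i = u *\<^sub>R xi X i + v *\<^sub>R xi Y i"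
  by (simp add: xi_def)

context econ begin

definition xopt :: "'n \<Rightarrow> real^'n \<Rightarrow> 'n input" where
  "xopt i P = (SOME x. x \<in> input_dom \<and> (\<forall>y\<in>input_dom. obj i P y \<le> obj i P x))"

definition pi :: "'n \<Rightarrow> real^'n \<Rightarrow> real" where
  "pi i P = obj i P (xopt i P)"

definition Phi :: "real \<Rightarrow> real^'n \<Rightarrow> real" where
  "Phi c P = (\<Sum>i\<in>UNIV. pi i P) - (\<Sum>k\<in>UNIV. G c k (P$k))"

definition Zf :: "'n alloc \<Rightarrow> real^'n" where
  "Zf X = (\<chi> k. F k (xi X k) - (\<Sum>i\<in>UNIV. fst X $ i $ k))"

definition argset :: "real^'n \<Rightarrow> 'n alloc set" where
  "argset P = {X. \<forall>i. xi X i \<in> input_dom \<and> (\<forall>y\<in>input_dom. obj i P y \<le> obj i P (xi X i))}"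

definition Xopt :: "real^'n \<Rightarrow> 'n alloc" where
  "Xopt P = ((\<chi> i. fst (xopt i P)), (\<chi> i. fst (snd (xopt i P))), (\<chi> i. snd (snd (xopt i P))))"

lemma xopt: "P \<in> pos \<Longrightarrow> xopt i P \<in> input_dom \<and> (\<forall>y\<in>input_dom. obj i P y \<le> obj i P (xopt i P))"
  unfolding xopt_def using argmax_exists[of P i] by (simp add: pos_def) (rule someI_ex, blast)

lemma pi_ge: "P \<in> pos \<Longrightarrow> y \<in> input_dom \<Longrightarrow> obj i P y \<le> pi i P"
  using xopt[of P i] by (simp add: pi_def)

lemma xi_Xopt: "xi (Xopt P) i = xopt i P"
  by (simp add: xi_def Xopt_def)

lemma Xopt_argset: "P \<in> pos \<Longrightarrow> Xopt P \<in> argset P"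
  using xopt by (simp add: argset_def xi_Xopt)

lemma argset_pi: "P \<in> pos \<Longrightarrow> X \<in> argset P \<Longrightarrow> pi i P = obj i P (xi X i)"
proof -
  assume h: "P \<in> pos" "X \<in> argset P"
  have a: "xi X i \<in> input_dom" "\<forall>y\<in>input_dom. obj i P y \<le> obj i P (xi X i)" using h(2) by (simp_all add: argset_def)
  have "obj i P (xopt i P) \<le> obj i P (xi X i)" using a xopt[OF h(1), of i] by simp
  moreover have "obj i P (xi X i) \<le> obj i P (xopt i P)" using a xopt[OF h(1), of i] by simp
  ultimately show ?thesis by (simp add: pi_def)
qed

lemma obj_shift:
  "obj i P' x = obj i P x + (P'$i - P$i) * F i x - (\<Sum>j\<in>UNIV. (P'$j - P$j) * fst x $ j)"
  by (simp add: obj_alt lin_def algebra_simps sum_subtractf)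

lemma obj_affine:
  assumes "u + v = 1"
  shows "obj i (u *\<^sub>R P + v *\<^sub>R P') x = u * obj i P x + v * obj i P' x"
proof -
  have v: "v = 1 - u" using assms by simp
  have "lin (u *\<^sub>R P + v *\<^sub>R P') x = u * lin P x + v * lin P' x"
    unfolding lin_def v by (simp add: sum.distrib sum_distrib_left algebra_simps sum_subtractf)
  then show ?thesis unfolding obj_alt v by (simp add: algebra_simps)
qed

lemma pi_convex: "convex_on pos (pi i)"
proof (rule convex_onI)
  show "convex pos" by (rule convex_pos)
  fix t :: real and P P' :: "real^'n"
  assume h: "0 < t" "t < 1" "P \<in> pos" "P' \<in> pos"
  have Pc: "(1 - t) *\<^sub>R P + t *\<^sub>R P' \<in> pos"
    by (intro convexD[OF convex_pos]) (use h in auto)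
  have "pi i ((1 - t) *\<^sub>R P + t *\<^sub>R P') = obj i ((1 - t) *\<^sub>R P + t *\<^sub>R P') (xopt i ((1 - t) *\<^sub>R P + t *\<^sub>R P'))"
    by (simp add: pi_def)
  also have "\<dots> = (1-t) * obj i P (xopt i ((1 - t) *\<^sub>R P + t *\<^sub>R P')) + t * obj i P' (xopt i ((1 - t) *\<^sub>R P + t *\<^sub>R P'))"
    by (rule obj_affine) simp
  also have "\<dots> \<le> (1-t) * pi i P + t * pi i P'"
    using h xopt[OF Pc, of i] pi_ge[OF h(3)] pi_ge[OF h(4)]
    by (intro add_mono mult_left_mono) simp_all
  finally show "pi i ((1 - t) *\<^sub>R P + t *\<^sub>R P') \<le> (1-t) * pi i P + t * pi i P'" .
qed

lemma pi_cont: "continuous_on pos (pi i)"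
  by (rule convex_on_continuous[OF open_pos pi_convex])

lemma sum_shift:
  "(\<Sum>i\<in>UNIV. v$i * F i (xi X i) - (\<Sum>j\<in>UNIV. v$j * fst (xi X i) $ j)) = v \<bullet> Zf X"
proof -
  have "v \<bullet> Zf X = (\<Sum>k\<in>UNIV. v$k * F k (xi X k)) - (\<Sum>k\<in>UNIV. \<Sum>i\<in>UNIV. v$k * fst X $ i $ k)"
    by (simp add: inner_vec_def Zf_def right_diff_distrib sum_subtractf sum_distrib_left)
  also have "(\<Sum>k\<in>UNIV. \<Sum>i\<in>UNIV. v$k * fst X $ i $ k) = (\<Sum>i\<in>UNIV. \<Sum>k\<in>UNIV. v$k * fst X $ i $ k)"
    by (rule sum.swap)
  finally show ?thesis by (simp add: xi_def sum_subtractf)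
qed

lemma dir_ineq:
  assumes P: "P \<in> pos" "P' \<in> pos" and c: "0 < c" "\<forall>k. c \<le> P$k \<and> c \<le> P'$k" and X: "X \<in> argset P'"
  shows "Phi c P' - Phi c P \<le> (P' - P) \<bullet> Zf X - (\<Sum>k\<in>UNIV. (P'$k - P$k) * D k (P'$k))"
proof -
  have "(\<Sum>i\<in>UNIV. pi i P') = (\<Sum>i\<in>UNIV. obj i P' (xi X i))"
    using argset_pi[OF P(2) X] by simp
  also have "\<dots> = (\<Sum>i\<in>UNIV. obj i P (xi X i)) + (\<Sum>i\<in>UNIV. (P'-P)$i * F i (xi X i) - (\<Sum>j\<in>UNIV. (P'-P)$j * fst (xi X i) $ j))"
    by (simp add: obj_shift[of _ P' _ P] sum.distrib sum_subtractf)
  also have "\<dots> = (\<Sum>i\<in>UNIV. obj i P (xi X i)) + (P' - P) \<bullet> Zf X"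
    by (simp only: sum_shift)
  also have "(\<Sum>i\<in>UNIV. obj i P (xi X i)) \<le> (\<Sum>i\<in>UNIV. pi i P)"
    using X unfolding argset_def by (intro sum_mono pi_ge[OF P(1)]) simp
  finally have A: "(\<Sum>i\<in>UNIV. pi i P') \<le> (\<Sum>i\<in>UNIV. pi i P) + (P' - P) \<bullet> Zf X" by simp
  have "G c k (P$k) \<le> G c k (P'$k) + D k (P'$k) * (P$k - P'$k)" for k
    using c by (intro G_super) auto
  then have "(\<Sum>k\<in>UNIV. G c k (P$k)) \<le> (\<Sum>k\<in>UNIV. G c k (P'$k) + D k (P'$k) * (P$k - P'$k))"
    by (intro sum_mono)
  also have "\<dots> = (\<Sum>k\<in>UNIV. G c k (P'$k)) - (\<Sum>k\<in>UNIV. (P'$k - P$k) * D k (P'$k))"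
    by (simp add: sum.distrib sum_subtractf algebra_simps flip: sum_negf)
  finally show ?thesis using A unfolding Phi_def by simp
qed

end

context econ begin

lemma pos_box: "P \<in> pos \<Longrightarrow> \<exists>a B. 0 < a \<and> a \<le> B \<and> (\<forall>k. a \<le> P$k \<and> P$k \<le> B)"
proof -
  assume P: "P \<in> pos"
  define a where "a = Min (range (\<lambda>k. P$k))"
  define B where "B = Max (range (\<lambda>k. P$k))"
  have aB: "\<forall>k. a \<le> P$k \<and> P$k \<le> B" by (simp add: a_def B_def)
  have a0: "0 < a" unfolding a_def using P by (subst Min_gr_iff) (auto simp: pos_def)
  have aleB: "a \<le> B" using aB by (meson order_trans)
  show ?thesis using aB a0 aleB by blast
qed

lemma argset_bounded:
  assumes "0 < a" "a \<le> B"
  shows "\<exists>Rb. \<forall>P X. (\<forall>k. a \<le> P$k \<and> P$k \<le> B) \<longrightarrow> X \<in> argset P \<longrightarrow> norm X \<le> Rb"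
proof -
  have "\<forall>i. \<exists>R>0. \<forall>P x. (\<forall>k. a \<le> P$k \<and> P$k \<le> B) \<longrightarrow> x \<in> input_dom \<longrightarrow> R \<le> norm x \<longrightarrow> obj i P x < - W i 0"
    using coercive[OF assms] by blast
  then obtain Rf where Rf: "\<And>i P x. (\<forall>k. a \<le> P$k \<and> P$k \<le> B) \<Longrightarrow> x \<in> input_dom \<Longrightarrow> Rf i \<le> norm x \<Longrightarrow> obj i P x < - W i 0"
    by metis
  have "norm X \<le> 3 * (\<Sum>i\<in>UNIV. Rf i)" if P: "\<forall>k. a \<le> P$k \<and> P$k \<le> B" and X: "X \<in> argset P" for P X
  proof -
    have "norm (xi X i) \<le> Rf i" for i
    proof (rule ccontr)
      assume "\<not> norm (xi X i) \<le> Rf i"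
      then have "obj i P (xi X i) < - W i 0" using Rf[OF P] X by (simp add: argset_def)
      moreover have "obj i P (0,0,0) \<le> obj i P (xi X i)"
      proof -
        have "\<forall>y\<in>input_dom. obj i P y \<le> obj i P (xi X i)" using X by (simp add: argset_def)
        then show ?thesis using dom_zero by blast
      qed
      moreover have "0 < P$i" using P assms by (meson less_le_trans)
      then have "- W i 0 \<le> obj i P (0,0,0)"
        using F_nonneg[OF dom_zero, of i] mult_nonneg_nonneg[of "P$i" "F i (0,0,0)"] by (simp add: obj_eq)
      ultimately show False by simp
    qed
    then have "(\<Sum>i\<in>UNIV. norm (xi X i)) \<le> (\<Sum>i\<in>UNIV. Rf i)" by (intro sum_mono)
    then show ?thesis using norm_X_le[of X] by simp
  qed
  then show ?thesis by blast
qed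

lemma subseq_limit:
  assumes Pn: "Pn \<longlonglongrightarrow> P" "P \<in> pos" and X: "\<And>n. Xn n \<in> argset (Pn n)" and bd: "bounded (range Xn)"
  shows "\<exists>r Xb. strict_mono r \<and> (Xn \<circ> r) \<longlonglongrightarrow> Xb \<and> Xb \<in> argset P \<and> (\<lambda>n. Zf (Xn (r n))) \<longlonglongrightarrow> Zf Xb"
proof -
  obtain Xb r where r: "strict_mono r" "(Xn \<circ> r) \<longlonglongrightarrow> Xb"
    using bounded_imp_convergent_subsequence[OF bd] by blast
  have Pr: "(Pn \<circ> r) \<longlonglongrightarrow> P" using LIMSEQ_subseq_LIMSEQ[OF Pn(1) r(1)] .
  have Pp: "\<forall>k. 0 < P$k" using Pn(2) by (simp add: pos_def)
  have K: "xi Xb i \<in> input_dom \<and> (\<forall>y\<in>input_dom. obj i P y \<le> obj i P (xi Xb i)) \<and>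
      (\<lambda>n. F i (xi (Xn (r n)) i)) \<longlonglongrightarrow> F i (xi Xb i)" for i
  proof -
    have a1: "\<And>n. xi (Xn (r n)) i \<in> input_dom" using X by (simp add: argset_def)
    have a2: "(\<lambda>n. xi (Xn (r n)) i) \<longlonglongrightarrow> xi Xb i"
      using xi_tendsto[OF r(2), of i] by (simp add: o_def)
    have a3: "\<And>n y. y \<in> input_dom \<Longrightarrow> obj i ((Pn \<circ> r) n) y \<le> obj i ((Pn \<circ> r) n) (xi (Xn (r n)) i)"
      using X by (simp add: argset_def)
    show ?thesis using key[OF Pr Pp a1 a2 a3] by simp
  qed
  have "Xb \<in> argset P" using K by (simp add: argset_def)
  moreover have "(\<lambda>n. Zf (Xn (r n))) \<longlonglongrightarrow> Zf Xb"
    unfolding Zf_def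
  proof (rule tendsto_vec_lambda)
    fix k
    have XX: "(\<lambda>n. Xn (r n)) \<longlonglongrightarrow> Xb" using r(2) by (simp add: o_def)
    then have "(\<lambda>n. fst (Xn (r n))) \<longlonglongrightarrow> fst Xb" by (rule tendsto_fst)
    then have "(\<lambda>n. \<Sum>i\<in>UNIV. fst (Xn (r n)) $ i $ k) \<longlonglongrightarrow> (\<Sum>i\<in>UNIV. fst Xb $ i $ k)"
      by (intro tendsto_sum tendsto_vec_nth)
    then show "(\<lambda>n. F k (xi (Xn (r n)) k) - (\<Sum>i\<in>UNIV. fst (Xn (r n)) $ i $ k)) \<longlonglongrightarrow>
               F k (xi Xb k) - (\<Sum>i\<in>UNIV. fst Xb $ i $ k)"
      using K[of k] by (intro tendsto_diff) simp_all
  qed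
  ultimately show ?thesis using r by blast
qed

lemma conv_firm:
  assumes P: "P \<in> pos" and x: "x \<in> input_dom" "\<forall>w\<in>input_dom. obj i P w \<le> obj i P x"
    and y: "y \<in> input_dom" "\<forall>w\<in>input_dom. obj i P w \<le> obj i P y"
    and uv: "0 \<le> u" "0 \<le> v" "u + v = 1"
  shows "u *\<^sub>R x + v *\<^sub>R y \<in> input_dom \<and> (\<forall>w\<in>input_dom. obj i P w \<le> obj i P (u *\<^sub>R x + v *\<^sub>R y)) \<and>
         F i (u *\<^sub>R x + v *\<^sub>R y) = u * F i x + v * F i y"
proof -
  define z where "z = u *\<^sub>R x + v *\<^sub>R y"
  have z: "z \<in> input_dom" unfolding z_def by (rule convexD[OF convex_input_dom x(1) y(1) uv])
  have Pi: "0 < P$i" using P by (simp add: pos_def)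
  have c1: "u * F i x + v * F i y \<le> F i z"
    using F_concave[of i] x(1) y(1) uv unfolding concave_on_iff z_def by blast
  have Lx: "snd (snd x) \<in> {0..}" "snd (snd y) \<in> {0..}" using x(1) y(1) dom_L by blast+
  have Lz: "snd (snd z) = u * snd (snd x) + v * snd (snd y)" by (simp add: z_def)
  have c2: "W i (snd (snd z)) \<le> u * W i (snd (snd x)) + v * W i (snd (snd y))"
    using W_convex[of i] Lx uv unfolding convex_on_def Lz by simp
  have c3: "lin P z = u * lin P x + v * lin P y"
    by (simp add: z_def lin_def sum.distrib sum_distrib_left algebra_simps)
  have M: "obj i P y = obj i P x" using x y by (meson order_antisym)
  have oz: "obj i P z \<le> obj i P x" using x(2) z by simp
  have PF: "P$i * (u * F i x + v * F i y) \<le> P$i * F i z" using c1 Pi by (intro mult_left_mono) simp_all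
  have e1: "P$i * (u * F i x + v * F i y) = u * (P$i * F i x) + v * (P$i * F i y)" by (simp add: algebra_simps)
  have ex: "P$i * F i x = obj i P x + lin P x + W i (snd (snd x))" by (simp add: obj_alt)
  have ey: "P$i * F i y = obj i P x + lin P y + W i (snd (snd y))" using M by (simp add: obj_alt)
  have ez: "P$i * F i z = obj i P z + lin P z + W i (snd (snd z))" by (simp add: obj_alt)
  have sum1: "u * (P$i * F i x) + v * (P$i * F i y) =
      obj i P x + (u * lin P x + v * lin P y) + (u * W i (snd (snd x)) + v * W i (snd (snd y)))"
    unfolding ex ey using uv by (simp add: algebra_simps flip: distrib_right)
  have "obj i P x \<le> obj i P z" using PF e1 sum1 ez c2 c3 by linarith
  then have opt: "\<forall>w\<in>input_dom. obj i P w \<le> obj i P z" using x(2) by (meson order_trans)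
  have "P$i * F i z \<le> P$i * (u * F i x + v * F i y)" using oz ez c2 c3 e1 sum1 by linarith
  then have "F i z \<le> u * F i x + v * F i y" using Pi by simp
  then have "F i z = u * F i x + v * F i y" using c1 by simp
  then show ?thesis using z opt by (simp add: z_def)
qed

lemma S_convex:
  assumes P: "P \<in> pos"
  shows "convex (Zf ` argset P)"
proof (rule convexI)
  fix s1 s2 u v assume h: "s1 \<in> Zf ` argset P" "s2 \<in> Zf ` argset P" "0 \<le> u" "0 \<le> (v::real)" "u + v = 1"
  obtain X Y where XY: "X \<in> argset P" "Y \<in> argset P" "s1 = Zf X" "s2 = Zf Y" using h by blast
  define Z where "Z = u *\<^sub>R X + v *\<^sub>R Y"
  have cf: "xi Z i \<in> input_dom \<and> (\<forall>w\<in>input_dom. obj i P w \<le> obj i P (xi Z i)) \<and>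
         F i (xi Z i) = u * F i (xi X i) + v * F i (xi Y i)" for i
    unfolding Z_def xi_comb using XY h by (intro conv_firm[OF P]) (simp_all add: argset_def)
  have "Z \<in> argset P" using cf by (simp add: argset_def)
  moreover have "Zf Z = u *\<^sub>R s1 + v *\<^sub>R s2"
  proof -
    have "Zf Z $ k = (u *\<^sub>R s1 + v *\<^sub>R s2) $ k" for k
    proof -
      have "(\<Sum>i\<in>UNIV. fst Z $ i $ k) = u * (\<Sum>i\<in>UNIV. fst X $ i $ k) + v * (\<Sum>i\<in>UNIV. fst Y $ i $ k)"
        by (simp add: Z_def sum.distrib sum_distrib_left)
      then show ?thesis using cf[of k] XY(3,4) by (simp add: Zf_def algebra_simps)
    qed
    then show ?thesis by (simp add: vec_eq_iff)
  qed
  ultimately show "u *\<^sub>R s1 + v *\<^sub>R s2 \<in> Zf ` argset P" by (metis image_eqI)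
qed

lemma S_closed:
  assumes P: "P \<in> pos"
  shows "closed (Zf ` argset P)"
  unfolding closed_sequential_limits
proof (intro allI impI, elim conjE)
  fix s l assume s: "\<forall>n. s n \<in> Zf ` argset P" "s \<longlonglongrightarrow> l"
  obtain a B where aB: "0 < a" "a \<le> B" "\<forall>k. a \<le> P$k \<and> P$k \<le> B" using pos_box[OF P] by blast
  obtain Rb where Rb: "\<And>X. X \<in> argset P \<Longrightarrow> norm X \<le> Rb" using argset_bounded[OF aB(1,2)] aB(3) by blast
  have "\<forall>n. \<exists>X. X \<in> argset P \<and> s n = Zf X" using s(1) by blast
  then obtain Xn where Xn: "\<And>n. Xn n \<in> argset P" "\<And>n. s n = Zf (Xn n)" by metis
  have bd: "bounded (range Xn)" unfolding bounded_iff using Rb Xn(1) by blast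
  obtain r Xb where r: "strict_mono r" "Xb \<in> argset P" "(\<lambda>n. Zf (Xn (r n))) \<longlonglongrightarrow> Zf Xb"
    using subseq_limit[of "\<lambda>n. P" P Xn, OF tendsto_const P _ bd] Xn(1) by blast
  have "(s \<circ> r) \<longlonglongrightarrow> l" using LIMSEQ_subseq_LIMSEQ[OF s(2) r(1)] .
  moreover have "(s \<circ> r) = (\<lambda>n. Zf (Xn (r n)))" using Xn(2) by (simp add: o_def)
  ultimately have "l = Zf Xb" using r(3) LIMSEQ_unique by metis
  then show "l \<in> Zf ` argset P" using r(2) by blast
qed

end

context econ begin

lemma pi_lb: "P \<in> pos \<Longrightarrow> - W i 0 \<le> pi i P"
proof -
  assume P: "P \<in> pos"
  have "0 < P$i" using P by (simp add: pos_def)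
  then have "- W i 0 \<le> obj i P (0,0,0)"
    using F_nonneg[OF dom_zero, of i] mult_nonneg_nonneg[of "P$i" "F i (0,0,0)"] by (simp add: obj_eq)
  also have "\<dots> \<le> pi i P" using pi_ge[OF P dom_zero] .
  finally show ?thesis .
qed

lemma sum_pi_lb: "P \<in> pos \<Longrightarrow> pi k P - (\<Sum>i\<in>UNIV. W i 0) \<le> (\<Sum>i\<in>UNIV. pi i P)"
proof -
  assume P: "P \<in> pos"
  have "pi k P + W k 0 \<le> (\<Sum>i\<in>UNIV. pi i P + W i 0)"
  proof (rule member_le_sum)
    fix x assume "x \<in> UNIV - {k}"
    show "0 \<le> pi x P + W x 0" using pi_lb[OF P, of x] by simp
  qed simp_all
  moreover have "W k 0 \<ge> 0" using W_pos[of 0 k] by simp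
  ultimately show ?thesis by (simp add: sum.distrib)
qed

lemma G_upper:
  assumes c: "0 < c" and T: "c \<le> T" and DT: "D k T \<le> \<epsilon>" and p: "c \<le> p"
  shows "G c k p \<le> G c k T + \<bar>D k T\<bar> * T + \<epsilon> * p"
proof -
  have "G c k p \<le> G c k T + D k T * (p - T)" using c T p by (intro G_super) simp_all
  moreover have "D k T * p \<le> \<epsilon> * p" using DT p c by (intro mult_right_mono) simp_all
  moreover have "- (D k T * T) \<le> \<bar>D k T\<bar> * T"
  proof -
    have "- (D k T) * T \<le> \<bar>D k T\<bar> * T" using T c by (intro mult_right_mono) simp_all
    then show ?thesis by simp
  qed
  ultimately show ?thesis by (simp add: algebra_simps)
qed

lemma coerc:
  assumes viab: "market_viability F \<or> unbounded_external_supply D"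
  shows "\<exists>pbar \<kappa>. pbar \<in> pos \<and> 0 < \<kappa> \<and>
    (\<forall>c>0. \<exists>C. \<forall>P. (\<forall>j. c \<le> P$j) \<longrightarrow> (\<forall>k. \<kappa> * (P$k / pbar$k) - C \<le> Phi c P))"
proof (cases "unbounded_external_supply D")
  case True
  define pbar :: "real^'n" where "pbar = (\<chi> k. 1)"
  have pb: "pbar \<in> pos" by (simp add: pbar_def pos_def)
  have "\<exists>C. \<forall>P. (\<forall>j. c \<le> P$j) \<longrightarrow> (\<forall>k. 1 * (P$k / pbar$k) - C \<le> Phi c P)" if c: "c > 0" for c
  proof -
    have "\<forall>k. \<exists>T. \<forall>p\<ge>T. D k p \<le> -1"
    proof
      fix k
      have "filterlim (D k) at_bot at_top" using True by (simp add: unbounded_external_supply_def)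
      then have "eventually (\<lambda>p. D k p \<le> -1) at_top" unfolding filterlim_at_bot by blast
      then show "\<exists>T. \<forall>p\<ge>T. D k p \<le> -1" unfolding eventually_at_top_linorder by blast
    qed
    then obtain Tf where Tf: "\<And>k p. p \<ge> Tf k \<Longrightarrow> D k p \<le> -1" by metis
    define T where "T k = max (Tf k) c" for k
    define Ck where "Ck k = G c k (T k) + \<bar>D k (T k)\<bar> * T k" for k
    have Gb: "G c k p \<le> Ck k - p" if "c \<le> p" for k p
      using G_upper[OF c _ _ that, of "T k" k "-1"] Tf[of k "T k"] by (simp add: T_def Ck_def)
    define C where "C = (\<Sum>i\<in>UNIV. W i 0) + (\<Sum>k\<in>UNIV. Ck k)"
    have "1 * (P$k / pbar$k) - C \<le> Phi c P" if P: "\<forall>j. c \<le> P$j" for P k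
    proof -
      have Pp: "P \<in> pos" using P c unfolding pos_def by (auto intro: less_le_trans)
      have s1: "- (\<Sum>i\<in>UNIV. W i 0) \<le> (\<Sum>i\<in>UNIV. pi i P)"
        using sum_mono[of UNIV "\<lambda>i. - W i 0" "\<lambda>i. pi i P"] pi_lb[OF Pp] by (simp add: sum_negf)
      have "(\<Sum>j\<in>UNIV. G c j (P$j)) \<le> (\<Sum>j\<in>UNIV. Ck j - P$j)"
        using Gb P by (intro sum_mono) simp
      also have "\<dots> = (\<Sum>j\<in>UNIV. Ck j) - (\<Sum>j\<in>UNIV. P$j)" by (simp add: sum_subtractf)
      also have "P$k \<le> (\<Sum>j\<in>UNIV. P$j)"
        by (rule member_le_sum) (use P c in \<open>auto intro: less_le_trans less_imp_le\<close>)
      then have "(\<Sum>j\<in>UNIV. Ck j) - (\<Sum>j\<in>UNIV. P$j) \<le> (\<Sum>j\<in>UNIV. Ck j) - P$k" by simp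
      finally show ?thesis using s1 unfolding Phi_def C_def by (simp add: pbar_def)
    qed
    then show ?thesis by blast
  qed
  then show ?thesis using pb by (intro exI[of _ pbar] exI[of _ 1]) simp
next
  case False
  then have "market_viability F" using viab by simp
  then obtain Qb Eb Lb pbar where vb: "\<forall>i j. 0 \<le> Qb $ i $ j" "\<forall>i. 0 \<le> Eb $ i" "\<forall>i. 0 \<le> Lb $ i"
      "\<forall>i. 0 < pbar $ i"
      "\<forall>i. pbar $ i * F i (Qb $ i, Eb $ i, Lb $ i) - (\<Sum>j\<in>UNIV. pbar $ j * Qb $ i $ j) > 0"
    unfolding market_viability_def by blast
  have pb: "pbar \<in> pos" using vb(4) by (simp add: pos_def)
  define xb where "xb i = (Qb $ i, Eb $ i, Lb $ i)" for i
  have xbd: "xb i \<in> input_dom" for i using vb by (simp add: xb_def dom_iff)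
  define VA where "VA i = pbar $ i * F i (xb i) - (\<Sum>j\<in>UNIV. pbar $ j * Qb $ i $ j)" for i
  define v where "v = Min (range VA)"
  have v: "0 < v" unfolding v_def using vb(5) by (subst Min_gr_iff) (auto simp: VA_def xb_def)
  have vle: "v \<le> VA i" for i unfolding v_def by simp
  define S where "S = (\<Sum>k\<in>UNIV. pbar$k)"
  have S: "0 < S" unfolding S_def using vb(4) by (simp add: sum_pos)
  define \<epsilon> where "\<epsilon> = v / (2 * S)"
  have eps: "0 < \<epsilon>" using v S by (simp add: \<epsilon>_def)
  define cst where "cst i = PE * Eb $ i + W i (Lb $ i)" for i
  have cst0: "0 \<le> cst i" for i using vb(2) PE_pos W_pos[of "Lb$i" i] vb(3) by (simp add: cst_def less_imp_le)
  have "\<exists>C. \<forall>P. (\<forall>j. c \<le> P$j) \<longrightarrow> (\<forall>k. (v/2) * (P$k / pbar$k) - C \<le> Phi c P)" if c: "c > 0" for c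
  proof -
    have "\<forall>k. \<exists>T. \<forall>p\<ge>T. D k p < \<epsilon>" using D_inf[OF eps] by blast
    then obtain Tf where Tf: "\<And>k p. p \<ge> Tf k \<Longrightarrow> D k p < \<epsilon>" by metis
    define T where "T k = max (Tf k) c" for k
    define Ck where "Ck k = G c k (T k) + \<bar>D k (T k)\<bar> * T k" for k
    have Gb: "G c k p \<le> Ck k + \<epsilon> * p" if "c \<le> p" for k p
      using G_upper[OF c _ _ that, of "T k" k \<epsilon>] Tf[of k "T k"] by (simp add: T_def Ck_def less_imp_le)
    define C where "C = (\<Sum>i\<in>UNIV. W i 0) + (\<Sum>k\<in>UNIV. Ck k) + (\<Sum>i\<in>UNIV. cst i)"
    have "(v/2) * (P$k / pbar$k) - C \<le> Phi c P" if P: "\<forall>j. c \<le> P$j" for P k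
    proof -
      have Pp: "P \<in> pos" using P c unfolding pos_def by (auto intro: less_le_trans)
      define lam where "lam = Max (range (\<lambda>j. P$j / pbar$j))"
      have "lam \<in> range (\<lambda>j. P$j / pbar$j)" unfolding lam_def by (rule Max_in) simp_all
      then obtain k0 where k0: "lam = P$k0 / pbar$k0" by blast
      have lam: "P$j / pbar$j \<le> lam" for j unfolding lam_def by simp
      have lam2: "P$j \<le> lam * pbar$j" for j using lam[of j] vb(4) by (simp add: pos_divide_le_eq)
      have lam0: "0 \<le> lam" using k0 Pp vb(4) by (simp add: pos_def less_imp_le)
      have "obj k0 P (xb k0) \<le> pi k0 P" using pi_ge[OF Pp xbd] .
      moreover have "obj k0 P (xb k0) = P$k0 * F k0 (xb k0) - (\<Sum>j\<in>UNIV. P$j * Qb $ k0 $ j) - cst k0"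
        by (simp add: xb_def obj_eq cst_def)
      moreover have "P$k0 = lam * pbar$k0" using k0 vb(4)[rule_format, of k0] by simp
      moreover have "(\<Sum>j\<in>UNIV. P$j * Qb $ k0 $ j) \<le> lam * (\<Sum>j\<in>UNIV. pbar$j * Qb $ k0 $ j)"
        unfolding sum_distrib_left
      proof (rule sum_mono)
        fix j show "P$j * Qb $ k0 $ j \<le> lam * (pbar$j * Qb $ k0 $ j)"
          using lam2[of j] vb(1) by (simp add: mult_right_mono flip: mult.assoc)
      qed
      moreover have "lam * v \<le> lam * VA k0" using lam0 vle by (simp add: mult_left_mono)
      ultimately have pk0: "lam * v - cst k0 \<le> pi k0 P"
        unfolding VA_def by (simp add: algebra_simps)
      have s1: "pi k0 P - (\<Sum>i\<in>UNIV. W i 0) \<le> (\<Sum>i\<in>UNIV. pi i P)" using sum_pi_lb[OF Pp] .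
      have "(\<Sum>j\<in>UNIV. G c j (P$j)) \<le> (\<Sum>j\<in>UNIV. Ck j + \<epsilon> * P$j)"
        using Gb P by (intro sum_mono) simp
      also have "\<dots> = (\<Sum>j\<in>UNIV. Ck j) + \<epsilon> * (\<Sum>j\<in>UNIV. P$j)" by (simp add: sum.distrib sum_distrib_left)
      also have "(\<Sum>j\<in>UNIV. P$j) \<le> lam * S" unfolding S_def sum_distrib_left by (rule sum_mono) (rule lam2)
      then have "\<epsilon> * (\<Sum>j\<in>UNIV. P$j) \<le> \<epsilon> * (lam * S)" using eps by simp
      also have "\<epsilon> * (lam * S) = lam * v / 2" using S by (simp add: \<epsilon>_def)
      finally have s2: "(\<Sum>j\<in>UNIV. G c j (P$j)) \<le> (\<Sum>j\<in>UNIV. Ck j) + lam * v / 2" by simp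
      have s3: "cst k0 \<le> (\<Sum>i\<in>UNIV. cst i)" by (rule member_le_sum) (simp_all add: cst0)
      have "(v/2) * (P$k / pbar$k) \<le> (v/2) * lam" using lam[of k] v by (intro mult_left_mono) simp_all
      then have s4: "(v/2) * (P$k / pbar$k) \<le> lam * v / 2" by (simp add: algebra_simps)
      show ?thesis using s1 s2 s3 s4 pk0 unfolding Phi_def C_def by linarith
    qed
    then show ?thesis by blast
  qed
  then show ?thesis using pb v by (intro exI[of _ pbar] exI[of _ "v/2"]) simp
qed

end

context econ begin

lemma existence:
  assumes viab: "market_viability F \<or> unbounded_external_supply D"
  shows "\<exists>P X. P \<in> pos \<and> X \<in> argset P \<and> Zf X = (\<chi> k. D k (P$k))"
proof -
  obtain pbar \<kappa> where pb: "pbar \<in> pos" "0 < \<kappa>"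
    and cf: "\<And>c. c > 0 \<Longrightarrow> \<exists>C. \<forall>P. (\<forall>j. c \<le> P$j) \<longrightarrow> (\<forall>k. \<kappa> * (P$k / pbar$k) - C \<le> Phi c P)"
    using coerc[OF viab] by blast
  have pbp: "0 < pbar$k" for k using pb by (simp add: pos_def)
  have "\<forall>k. \<exists>Fm. \<forall>P x. 0 < P$k \<and> P$k \<le> 1 \<and> (\<forall>j. P$k \<le> 2 * P$j) \<and> x \<in> input_dom \<and>
        obj k P (0,0,0) \<le> obj k P x \<longrightarrow> F k x \<le> Fm"
    using out_bound by blast
  then obtain Fm where Fm: "\<And>k P x. 0 < P$k \<Longrightarrow> P$k \<le> 1 \<Longrightarrow> (\<forall>j. P$k \<le> 2 * P$j) \<Longrightarrow> x \<in> input_dom \<Longrightarrow>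
        obj k P (0,0,0) \<le> obj k P x \<Longrightarrow> F k x \<le> Fm k"
    by metis
  have "\<forall>k. \<exists>\<epsilon>>0. \<forall>p. 0 < p \<and> p < \<epsilon> \<longrightarrow> Fm k < D k p" using D_zero by blast
  then obtain ep where ep: "\<And>k. 0 < ep k" "\<And>k p. 0 < p \<Longrightarrow> p < ep k \<Longrightarrow> Fm k < D k p" by metis
  define a where "a = min (1/2) (min (Min (range ep) / 3) (Min (range (\<lambda>k. pbar$k)) / 2))"
  have m1: "0 < Min (range ep)" using ep(1) by (subst Min_gr_iff) auto
  have m2: "0 < Min (range (\<lambda>k. pbar$k))" using pbp by (subst Min_gr_iff) auto
  have a0: "0 < a" using m1 m2 by (simp add: a_def)
  have a1: "a \<le> 1/2" by (simp add: a_def)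
  have a2: "2 * a < ep k" for k
  proof -
    have "Min (range ep) \<le> ep k" by simp
    then have "a \<le> ep k / 3" unfolding a_def by linarith
    then show ?thesis using ep(1)[of k] by linarith
  qed
  have a3: "a < pbar$k" for k
  proof -
    have "Min (range (\<lambda>k. pbar$k)) \<le> pbar$k" by simp
    then have "a \<le> pbar$k / 2" unfolding a_def by linarith
    then show ?thesis using pbp[of k] by linarith
  qed
  define c where "c = a/2"
  have c0: "0 < c" "c < a" using a0 by (simp_all add: c_def)
  obtain C where C: "\<And>P k. \<forall>j. c \<le> P$j \<Longrightarrow> \<kappa> * (P$k / pbar$k) - C \<le> Phi c P"
    using cf[OF c0(1)] by blast
  define \<beta> where "\<beta> = max 1 ((Phi c pbar + C + 1) / \<kappa>)"
  have b1: "1 \<le> \<beta>" by (simp add: \<beta>_def)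
  have b2: "Phi c pbar + C + 1 \<le> \<kappa> * \<beta>"
  proof -
    have "(Phi c pbar + C + 1) / \<kappa> \<le> \<beta>" by (simp add: \<beta>_def)
    then show ?thesis using pb(2) by (simp add: pos_divide_le_eq mult.commute)
  qed
  have pbb: "pbar$k \<le> \<beta> * pbar$k" for k
  proof -
    have "pbar$k * 1 \<le> pbar$k * \<beta>" using b1 pbp[of k] by (intro mult_left_mono) simp_all
    then show ?thesis by (simp add: mult.commute)
  qed
  have apb: "a < \<beta> * pbar$k" for k using a3[of k] pbb[of k] by simp
  define lo :: "real^'n" where "lo = (\<chi> k. a)"
  define hi :: "real^'n" where "hi = (\<chi> k. \<beta> * pbar$k)"
  define K where "K = cbox lo hi"
  have inK: "P \<in> K \<longleftrightarrow> (\<forall>k. a \<le> P$k \<and> P$k \<le> \<beta> * pbar$k)" for P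
    by (simp add: K_def mem_box_cart lo_def hi_def)
  have Kpos: "K \<subseteq> pos"
  proof
    fix P assume "P \<in> K"
    then have "\<forall>k. a \<le> P$k" by (simp add: inK)
    then show "P \<in> pos" using a0 by (auto simp: pos_def intro: less_le_trans)
  qed
  have Kc: "\<forall>j. c \<le> P$j" if "P \<in> K" for P using that c0 unfolding inK by (meson less_imp_le order_trans)
  have pbK: "pbar \<in> K" unfolding inK using a3 pbb by (simp add: less_imp_le)
  have cont: "continuous_on K (Phi c)"
    unfolding Phi_def
  proof (intro continuous_on_diff continuous_on_sum)
    fix i show "continuous_on K (pi i)" using continuous_on_subset[OF pi_cont Kpos] .
  next
    fix k
    show "continuous_on K (\<lambda>P. G c k (P$k))"
    proof (rule continuous_on_compose2[OF G_cont[OF c0(1), of "\<beta> * pbar$k" k]])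
      show "continuous_on K (\<lambda>P. P$k)" by (intro continuous_intros)
      show "(\<lambda>P. P$k) ` K \<subseteq> {c..\<beta> * pbar$k}" using Kc inK by auto
    qed
  qed
  obtain Ps where Ps: "Ps \<in> K" "\<And>P. P \<in> K \<Longrightarrow> Phi c Ps \<le> Phi c P"
    using continuous_attains_inf[OF compact_cbox[of lo hi, folded K_def] _ cont] pbK by blast
  have Psp: "Ps \<in> pos" using Ps Kpos by blast
  have up: "Ps$k < \<beta> * pbar$k" for k
  proof (rule ccontr)
    assume "\<not> Ps$k < \<beta> * pbar$k"
    then have "\<beta> * pbar$k \<le> Ps$k" by simp
    then have "\<beta> \<le> Ps$k / pbar$k" using pbp[of k] by (simp add: pos_le_divide_eq)
    then have "\<kappa> * \<beta> \<le> \<kappa> * (Ps$k/pbar$k)" using pb(2) by (intro mult_left_mono) simp_all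
    moreover have "\<kappa> * (Ps$k/pbar$k) - C \<le> Phi c Ps" using C Kc[OF Ps(1)] by blast
    moreover have "Phi c Ps \<le> Phi c pbar" using Ps(2)[OF pbK] .
    ultimately show False using b2 by linarith
  qed
  have lowr: "a < Ps$k" for k
  proof (rule ccontr)
    assume "\<not> a < Ps$k"
    moreover have "a \<le> Ps$k" using Ps(1) unfolding inK by blast
    ultimately have Pa: "Ps$k = a" by simp
    define t where "t = min a ((\<beta> * pbar$k - a)/2)"
    have t1: "t \<le> (\<beta> * pbar$k - a)/2" unfolding t_def by (rule min.cobounded2)
    have t2: "t \<le> a" unfolding t_def by (rule min.cobounded1)
    have t3: "0 < t" using a0 apb[of k] by (simp add: t_def)
    have "a + t \<le> a + (\<beta> * pbar$k - a)/2" using t1 by simp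
    also have "\<dots> < \<beta> * pbar$k" using apb[of k] by (simp add: field_simps)
    finally have t: "0 < t" "t \<le> a" "a + t < \<beta> * pbar$k" using t2 t3 by simp_all
    define P' where "P' = Ps + axis k t"
    have P'c: "P'$j = Ps$j + (if j = k then t else 0)" for j by (simp add: P'_def axis_def)
    have P'K: "P' \<in> K" unfolding inK
    proof
      fix j show "a \<le> P'$j \<and> P'$j \<le> \<beta> * pbar$j"
        using Ps(1) t Pa unfolding inK P'c by (cases "j = k") auto
    qed
    have P'p: "P' \<in> pos" using Kpos P'K by blast
    define X where "X = Xopt P'"
    have X: "X \<in> argset P'" using Xopt_argset[OF P'p] by (simp add: X_def)
    have "\<forall>j. c \<le> Ps$j \<and> c \<le> P'$j" using Kc[OF Ps(1)] Kc[OF P'K] by blast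
    then have di: "Phi c P' - Phi c Ps \<le> (P' - Ps) \<bullet> Zf X - (\<Sum>j\<in>UNIV. (P'$j - Ps$j) * D j (P'$j))"
      using dir_ineq[OF Psp P'p c0(1) _ X] by blast
    have e1: "(P' - Ps) \<bullet> Zf X = t * Zf X $ k" by (simp add: P'_def inner_axis')
    have e2: "(\<Sum>j\<in>UNIV. (P'$j - Ps$j) * D j (P'$j)) = t * D k (a + t)"
    proof -
      have "(\<Sum>j\<in>UNIV. (P'$j - Ps$j) * D j (P'$j)) = (\<Sum>j\<in>UNIV. if j = k then t * D k (P'$k) else 0)"
        by (rule sum.cong) (simp_all add: P'c)
      also have "\<dots> = t * D k (P'$k)" by simp
      finally show ?thesis using P'c[of k] Pa by simp
    qed
    have xk: "xi X k \<in> input_dom" "\<forall>y\<in>input_dom. obj k P' y \<le> obj k P' (xi X k)"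
      using X by (simp_all add: argset_def)
    have zk: "Zf X $ k \<le> F k (xi X k)"
    proof -
      have "0 \<le> fst X $ i $ k" for i
        using X unfolding argset_def xi_def by (auto simp: dom_iff)
      then have "0 \<le> (\<Sum>i\<in>UNIV. fst X $ i $ k)" by (simp add: sum_nonneg)
      then show ?thesis by (simp add: Zf_def)
    qed
    have fb: "F k (xi X k) \<le> Fm k"
    proof (rule Fm)
      show "0 < P'$k" using P'c[of k] Pa a0 t by simp
      show "P'$k \<le> 1" using P'c[of k] Pa t a1 by simp
      show "\<forall>j. P'$k \<le> 2 * P'$j"
      proof
        fix j have "a \<le> P'$j" using P'K inK by blast
        then show "P'$k \<le> 2 * P'$j" using P'c[of k] Pa t by simp
      qed
      show "xi X k \<in> input_dom" by (rule xk(1))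
      show "obj k P' (0,0,0) \<le> obj k P' (xi X k)" using xk(2) dom_zero by blast
    qed
    have db: "Fm k < D k (a + t)" using ep(2)[of "a+t" k] a0 t a2[of k] by simp
    have "t * Zf X $ k - t * D k (a + t) = t * (Zf X $ k - D k (a + t))" by (simp add: algebra_simps)
    also have "\<dots> < 0" using t(1) zk fb db by (simp add: mult_pos_neg)
    finally have "Phi c P' < Phi c Ps" using di e1 e2 by simp
    then show False using Ps(2)[OF P'K] by simp
  qed
  define d :: "real^'n" where "d = (\<chi> k. D k (Ps$k))"
  have "d \<in> Zf ` argset Ps"
  proof (rule ccontr)
    assume nd: "d \<notin> Zf ` argset Ps"
    obtain w b where wb: "w \<bullet> d < b" "\<forall>s\<in>Zf ` argset Ps. b < w \<bullet> s"
      using separating_hyperplane_closed_point[OF S_convex[OF Psp] S_closed[OF Psp] nd] by blast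
    define u where "u = - w"
    define \<delta>0 where "\<delta>0 = Min (range (\<lambda>k. min (Ps$k - a) (\<beta> * pbar$k - Ps$k)))"
    have d0: "0 < \<delta>0" unfolding \<delta>0_def using lowr up by (subst Min_gr_iff) auto
    have d1: "\<delta>0 \<le> Ps$k - a" "\<delta>0 \<le> \<beta> * pbar$k - Ps$k" for k
    proof -
      have "\<delta>0 \<le> min (Ps$k - a) (\<beta> * pbar$k - Ps$k)" unfolding \<delta>0_def by (rule Min_le) simp_all
      then show "\<delta>0 \<le> Ps$k - a" "\<delta>0 \<le> \<beta> * pbar$k - Ps$k" by simp_all
    qed
    define s where "s = \<delta>0 / (2 * (norm u + 1))"
    have nu: "0 < norm u + 1" using norm_ge_zero[of u] by linarith
    have s0: "0 < s" using d0 nu unfolding s_def by (intro divide_pos_pos) simp_all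
    have su: "s * norm u < \<delta>0"
    proof -
      have "s * norm u \<le> s * (norm u + 1)" using s0 by simp
      also have "\<dots> = \<delta>0 / 2" using nu unfolding s_def by (simp add: field_simps)
      finally show ?thesis using d0 by simp
    qed
    define t where "t n = s * inverse (real (Suc n))" for n
    have tp: "0 < t n" for n using s0 by (simp add: t_def)
    have tle: "t n \<le> s" for n
    proof -
      have "inverse (real (Suc n)) \<le> 1" by (simp add: inverse_le_1_iff)
      then show ?thesis using s0 by (simp add: t_def mult_left_le)
    qed
    have t0: "t \<longlonglongrightarrow> 0" unfolding t_def using tendsto_mult_right_zero[OF LIMSEQ_inverse_real_of_nat] by simp
    define Pn where "Pn n = Ps + t n *\<^sub>R u" for n
    have Pnc: "Pn n $ k = Ps$k + t n * u$k" for n k by (simp add: Pn_def)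
    have small: "\<bar>t n * u$k\<bar> < \<delta>0" for n k
    proof -
      have "\<bar>t n * u$k\<bar> = t n * \<bar>u$k\<bar>" using tp[of n] by (simp add: abs_mult)
      also have "\<dots> \<le> s * norm u" using tle[of n] tp[of n] component_le_norm_cart[of u k]
        by (intro mult_mono) simp_all
      finally show ?thesis using su by simp
    qed
    have PnK: "Pn n \<in> K" for n unfolding inK
    proof
      fix k show "a \<le> Pn n $ k \<and> Pn n $ k \<le> \<beta> * pbar$k"
        using small[of n k] d1[of k] unfolding Pnc by (simp add: abs_less_iff)
    qed
    have Pnp: "Pn n \<in> pos" for n using PnK Kpos by blast
    have Pnl: "Pn \<longlonglongrightarrow> Ps"
    proof -
      have "(\<lambda>n. Ps + t n *\<^sub>R u) \<longlonglongrightarrow> Ps + 0 *\<^sub>R u" using t0 by (intro tendsto_intros)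
      then show ?thesis by (simp add: Pn_def[abs_def])
    qed
    define Xn where "Xn n = Xopt (Pn n)" for n
    have Xn: "Xn n \<in> argset (Pn n)" for n using Xopt_argset[OF Pnp] by (simp add: Xn_def)
    define Bm where "Bm = Max (range (\<lambda>k. \<beta> * pbar$k))"
    have Bm: "\<beta> * pbar$k \<le> Bm" for k unfolding Bm_def by (rule Max_ge) auto
    have aBm: "a \<le> Bm" using apb[of undefined] Bm[of undefined] by simp
    obtain Rb where Rb: "\<And>P X. \<forall>k. a \<le> P$k \<and> P$k \<le> Bm \<Longrightarrow> X \<in> argset P \<Longrightarrow> norm X \<le> Rb"
      using argset_bounded[OF a0 aBm] by blast
    have "norm (Xn n) \<le> Rb" for n
    proof (rule Rb[OF _ Xn])
      show "\<forall>k. a \<le> Pn n $ k \<and> Pn n $ k \<le> Bm" using PnK[of n] Bm unfolding inK by (meson order_trans)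
    qed
    then have bd: "bounded (range Xn)" unfolding bounded_iff by blast
    have ineq: "(\<Sum>k\<in>UNIV. u$k * D k (Pn n $ k)) \<le> u \<bullet> Zf (Xn n)" for n
    proof -
      have "\<forall>j. c \<le> Ps$j \<and> c \<le> Pn n$j" using Kc[OF Ps(1)] Kc[OF PnK] by blast
      then have di: "Phi c (Pn n) - Phi c Ps \<le> (Pn n - Ps) \<bullet> Zf (Xn n) - (\<Sum>j\<in>UNIV. (Pn n$j - Ps$j) * D j (Pn n$j))"
        using dir_ineq[OF Psp Pnp c0(1) _ Xn] by blast
      have e1: "(Pn n - Ps) \<bullet> Zf (Xn n) = t n * (u \<bullet> Zf (Xn n))" by (simp add: Pn_def)
      have e2: "(\<Sum>j\<in>UNIV. (Pn n$j - Ps$j) * D j (Pn n$j)) = t n * (\<Sum>j\<in>UNIV. u$j * D j (Pn n$j))"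
        by (simp add: Pnc sum_distrib_left mult.assoc)
      have "Phi c Ps \<le> Phi c (Pn n)" using Ps(2)[OF PnK] .
      then have "0 \<le> t n * (u \<bullet> Zf (Xn n) - (\<Sum>j\<in>UNIV. u$j * D j (Pn n$j)))"
        using di e1 e2 by (simp add: algebra_simps)
      then show ?thesis using tp[of n] by (simp add: zero_le_mult_iff)
    qed
    obtain r Xb where r: "strict_mono r" "Xb \<in> argset Ps" "(\<lambda>n. Zf (Xn (r n))) \<longlonglongrightarrow> Zf Xb"
      using subseq_limit[OF Pnl Psp Xn bd] by blast
    have l1: "(\<lambda>n. u \<bullet> Zf (Xn (r n))) \<longlonglongrightarrow> u \<bullet> Zf Xb" using r(3) by (intro tendsto_intros)
    have Prl: "(\<lambda>n. Pn (r n)) \<longlonglongrightarrow> Ps" using LIMSEQ_subseq_LIMSEQ[OF Pnl r(1)] by (simp add: o_def)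
    have l2: "(\<lambda>n. \<Sum>k\<in>UNIV. u$k * D k (Pn (r n) $ k)) \<longlonglongrightarrow> (\<Sum>k\<in>UNIV. u$k * D k (Ps$k))"
    proof (intro tendsto_sum tendsto_mult tendsto_const)
      fix k
      have "isCont (D k) (Ps$k)"
        using D_cont[of k] Psp continuous_on_eq_continuous_at[OF open_greaterThan, of 0 "D k"]
        by (simp add: pos_def)
      moreover have "(\<lambda>n. Pn (r n) $ k) \<longlonglongrightarrow> Ps$k" using Prl by (intro tendsto_intros)
      ultimately show "(\<lambda>n. D k (Pn (r n) $ k)) \<longlonglongrightarrow> D k (Ps$k)" by (rule isCont_tendsto_compose)
    qed
    have "(\<Sum>k\<in>UNIV. u$k * D k (Ps$k)) \<le> u \<bullet> Zf Xb"
      using LIMSEQ_le[OF l2 l1] ineq by blast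
    moreover have "(\<Sum>k\<in>UNIV. u$k * D k (Ps$k)) = u \<bullet> d" by (simp add: d_def inner_vec_def)
    moreover have "b < w \<bullet> Zf Xb" using wb(2) r(2) by blast
    ultimately show False using wb(1) by (simp add: u_def)
  qed
  then obtain X where X: "X \<in> argset Ps" "d = Zf X" by blast
  then show ?thesis using Psp unfolding d_def by metis
qed

end

context econ begin

lemma ce_of:
  assumes P: "P \<in> pos" and X: "X \<in> argset P" and Z: "Zf X = (\<chi> k. D k (P$k))"
  shows "competitive_equilibrium F W D PE P (fst X) (fst (snd X)) (snd (snd X))"
proof -
  have xd: "xi X i \<in> input_dom" "\<forall>y\<in>input_dom. obj i P y \<le> obj i P (xi X i)" for i
    using X by (simp_all add: argset_def)
  have nn: "(\<forall>j. 0 \<le> fst X $ i $ j) \<and> 0 \<le> fst (snd X) $ i \<and> 0 \<le> snd (snd X) $ i" for i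
    using xd(1)[of i] by (simp add: xi_def dom_iff)
  have clr: "F i (fst X $ i, fst (snd X) $ i, snd (snd X) $ i) = D i (P $ i) + (\<Sum>j\<in>UNIV. fst X $ j $ i)" for i
  proof -
    have "Zf X $ i = D i (P$i)" using Z by simp
    then show ?thesis by (simp add: Zf_def xi_def)
  qed
  have opt: "profit F W i P PE q E' L' \<le> profit F W i P PE (fst X $ i) (fst (snd X) $ i) (snd (snd X) $ i)"
    if "(q, E', L') \<in> input_dom" for i q E' L'
    using xd(2)[of i, rule_format, OF that] by (simp add: obj_def xi_def)
  show ?thesis unfolding competitive_equilibrium_def
    using P nn clr opt by (simp add: pos_def less_imp_le)
qed

lemma ce_facts:
  assumes "competitive_equilibrium F W D PE P Q E L"
  shows "\<And>i. (Q$i, E$i, L$i) \<in> input_dom"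
    and "\<And>i y. y \<in> input_dom \<Longrightarrow> obj i P y \<le> obj i P (Q$i, E$i, L$i)"
    and "Zf (Q, E, L) = (\<chi> k. D k (P$k))"
proof -
  show "(Q$i, E$i, L$i) \<in> input_dom" for i using assms by (simp add: competitive_equilibrium_def dom_iff)
  show "obj i P y \<le> obj i P (Q$i, E$i, L$i)" if "y \<in> input_dom" for i y
  proof -
    obtain q E' L' where y: "y = (q, E', L')" by (cases y) simp
    show ?thesis using assms that unfolding competitive_equilibrium_def y by (simp add: obj_def)
  qed
  have "Zf (Q, E, L) $ k = D k (P$k)" for k
    using assms by (simp add: competitive_equilibrium_def Zf_def xi_def)
  then show "Zf (Q, E, L) = (\<chi> k. D k (P$k))" by (simp add: vec_eq_iff)
qed

lemma price_unique:
  assumes P: "\<forall>i. 0 < P$i" "\<forall>i. 0 < P'$i"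
    and ce: "competitive_equilibrium F W D PE P Q E L" "competitive_equilibrium F W D PE P' Q' E' L'"
  shows "P = P'"
proof -
  define X where "X = (Q, E, L)"
  define X' where "X' = (Q', E', L')"
  have xiX: "xi X i = (Q$i, E$i, L$i)" "xi X' i = (Q'$i, E'$i, L'$i)" for i by (simp_all add: xi_def X_def X'_def)
  note f1 = ce_facts[OF ce(1)] and f2 = ce_facts[OF ce(2)]
  define dl where "dl i y = (P'$i - P$i) * F i y - (\<Sum>j\<in>UNIV. (P'$j - P$j) * fst y $ j)" for i y
  have sh: "obj i P' y = obj i P y + dl i y" for i y unfolding dl_def by (simp add: obj_shift[of i P' y P])
  have "dl i (xi X i) \<le> dl i (xi X' i)" for i
  proof -
    have "obj i P (xi X' i) \<le> obj i P (xi X i)" using f1(2) f2(1) xiX by simp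
    moreover have "obj i P' (xi X i) \<le> obj i P' (xi X' i)" using f2(2) f1(1) xiX by simp
    ultimately show ?thesis using sh[of i "xi X i"] sh[of i "xi X' i"] by simp
  qed
  then have "(\<Sum>i\<in>UNIV. dl i (xi X i)) \<le> (\<Sum>i\<in>UNIV. dl i (xi X' i))" by (intro sum_mono)
  then have "(P' - P) \<bullet> Zf X \<le> (P' - P) \<bullet> Zf X'" unfolding dl_def sum_shift[symmetric] by simp
  moreover have "Zf X = (\<chi> k. D k (P$k))" "Zf X' = (\<chi> k. D k (P'$k))" using f1(3) f2(3) by (simp_all add: X_def X'_def)
  ultimately have le: "(\<Sum>k\<in>UNIV. (P'$k - P$k) * (D k (P$k) - D k (P'$k))) \<le> 0"
    by (simp add: inner_vec_def algebra_simps sum_subtractf sum.distrib)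
  have tpos: "P'$k \<noteq> P$k \<Longrightarrow> 0 < (P'$k - P$k) * (D k (P$k) - D k (P'$k))" for k
  proof -
    assume ne: "P'$k \<noteq> P$k"
    show ?thesis
    proof (cases "P$k < P'$k")
      case True
      then have "D k (P'$k) < D k (P$k)" using P by (intro D_dec) simp_all
      then show ?thesis using True by (simp add: mult_pos_pos)
    next
      case False
      then have lt: "P'$k < P$k" using ne by simp
      then have "D k (P$k) < D k (P'$k)" using P by (intro D_dec) simp_all
      then show ?thesis using lt by (simp add: mult_neg_neg)
    qed
  qed
  have tnn: "0 \<le> (P'$k - P$k) * (D k (P$k) - D k (P'$k))" for k
    using tpos[of k] by (cases "P'$k = P$k") simp_all
  have "(\<Sum>k\<in>UNIV. (P'$k - P$k) * (D k (P$k) - D k (P'$k))) = 0"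
    using le tnn by (meson antisym sum_nonneg)
  then have "\<forall>k\<in>UNIV. (P'$k - P$k) * (D k (P$k) - D k (P'$k)) = 0"
    using tnn by (simp add: sum_nonneg_eq_0_iff)
  then have z: "(P'$k - P$k) * (D k (P$k) - D k (P'$k)) = 0" for k by blast
  have "P'$k = P$k" for k
  proof (rule ccontr)
    assume "P'$k \<noteq> P$k"
    then have "0 < (P'$k - P$k) * (D k (P$k) - D k (P'$k))" by (rule tpos)
    then show False using z[of k] by simp
  qed
  then show ?thesis by (simp add: vec_eq_iff)
qed

lemma firm_unique:
  assumes sc: "strictly_concave_on input_dom (F i)" and P: "\<forall>k. 0 < P$k"
    and x: "x \<in> input_dom" "\<forall>w\<in>input_dom. obj i P w \<le> obj i P x"
    and y: "y \<in> input_dom" "\<forall>w\<in>input_dom. obj i P w \<le> obj i P y"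
  shows "x = y"
proof (rule ccontr)
  assume ne: "x \<noteq> y"
  define m where "m = (1 - 1/2) *\<^sub>R x + (1/2::real) *\<^sub>R y"
  have md: "m \<in> input_dom" unfolding m_def by (rule convexD[OF convex_input_dom x(1) y(1)]) simp_all
  have H: "\<forall>x\<in>input_dom. \<forall>y\<in>input_dom. x \<noteq> y \<longrightarrow> (\<forall>t. 0 < t \<and> t < 1 \<longrightarrow>
        (1 - t) * F i x + t * F i y < F i ((1 - t) *\<^sub>R x + t *\<^sub>R y))"
    using sc unfolding strictly_concave_on_def by blast
  have c1: "(1 - 1/2) * F i x + (1/2) * F i y < F i m"
    unfolding m_def by (rule H[rule_format, OF x(1) y(1) ne]) simp
  have Lx: "snd (snd x) \<in> {0..}" "snd (snd y) \<in> {0..}" using x(1) y(1) dom_L by blast+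
  have c2: "W i (snd (snd m)) \<le> (1 - 1/2) * W i (snd (snd x)) + (1/2) * W i (snd (snd y))"
    using convex_onD[OF W_convex, of "1/2" "snd (snd x)" "snd (snd y)" i] Lx by (simp add: m_def)
  have c3: "lin P m = (1 - 1/2) * lin P x + (1/2) * lin P y"
    by (simp add: m_def lin_def sum.distrib sum_distrib_left algebra_simps)
  have Pi: "0 < P$i" using P by simp
  have "P$i * ((1 - 1/2) * F i x + (1/2) * F i y) < P$i * F i m" using c1 Pi by simp
  then have "(1 - 1/2) * obj i P x + (1/2) * obj i P y < obj i P m"
    using c2 c3 unfolding obj_alt by (simp add: algebra_simps)
  moreover have "obj i P y = obj i P x" using x y by (meson order_antisym)
  moreover have "obj i P m \<le> obj i P x" using x(2) md by simp
  ultimately show False by simp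
qed

end

theorem theorem3p1:
  fixes F :: "'n::finite \<Rightarrow> 'n input \<Rightarrow> real"
    and W :: "'n \<Rightarrow> real \<Rightarrow> real"
    and D :: "'n \<Rightarrow> real \<Rightarrow> real"
    and PE :: real
  assumes PE_pos: "0 < PE"
    and F_nonneg: "\<And>i x. x \<in> input_dom \<Longrightarrow> 0 \<le> F i x"
    and W_pos: "\<And>i L. 0 \<le> L \<Longrightarrow> 0 < W i L"
    and prod_labor: "\<And>i. (prod_assm_a (F i) \<and> labor_assm (W i)) \<or>
                         (prod_assm_b (F i) \<and> labor_assm (W i) \<and> growth_assm (W i))"
    and demand: "\<And>i. demand_assm (D i)"
    and viab: "market_viability F \<or> unbounded_external_supply D"
  shows "(\<exists>P Q E L. (\<forall>i. 0 < P $ i) \<and> competitive_equilibrium F W D PE P Q E L)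
    \<and> (\<forall>P Q E L P' Q' E' L'.
          (\<forall>i. 0 < P $ i) \<and> competitive_equilibrium F W D PE P Q E L \<and>
          (\<forall>i. 0 < P' $ i) \<and> competitive_equilibrium F W D PE P' Q' E' L' \<longrightarrow> P = P')
    \<and> ((\<forall>i. strictly_concave_on input_dom (F i) \<and> strictly_convex_on {0..} (W i)) \<longrightarrow>
        (\<forall>P Q E L P' Q' E' L'.
          (\<forall>i. 0 < P $ i) \<and> competitive_equilibrium F W D PE P Q E L \<and>
          (\<forall>i. 0 < P' $ i) \<and> competitive_equilibrium F W D PE P' Q' E' L' \<longrightarrow>
          P = P' \<and> Q = Q' \<and> E = E' \<and> L = L'))"
proof -
  interpret e: econ F W D PE
    by (unfold_locales) (fact PE_pos, fact F_nonneg, fact W_pos, fact prod_labor, fact demand)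
  have ex: "\<exists>P Q E L. (\<forall>i. 0 < P $ i) \<and> competitive_equilibrium F W D PE P Q E L"
  proof -
    obtain P X where PX: "P \<in> pos" "X \<in> e.argset P" "e.Zf X = (\<chi> k. D k (P$k))"
      using e.existence[OF viab] by blast
    have "competitive_equilibrium F W D PE P (fst X) (fst (snd X)) (snd (snd X))"
      using e.ce_of[OF PX] .
    then show ?thesis using PX(1) by (auto simp: pos_def)
  qed
  have pu: "\<forall>P Q E L P' Q' E' L'.
          (\<forall>i. 0 < P $ i) \<and> competitive_equilibrium F W D PE P Q E L \<and>
          (\<forall>i. 0 < P' $ i) \<and> competitive_equilibrium F W D PE P' Q' E' L' \<longrightarrow> P = P'"
    using e.price_unique by blast
  have fu: "(\<forall>i. strictly_concave_on input_dom (F i) \<and> strictly_convex_on {0..} (W i)) \<longrightarrow>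
        (\<forall>P Q E L P' Q' E' L'.
          (\<forall>i. 0 < P $ i) \<and> competitive_equilibrium F W D PE P Q E L \<and>
          (\<forall>i. 0 < P' $ i) \<and> competitive_equilibrium F W D PE P' Q' E' L' \<longrightarrow>
          P = P' \<and> Q = Q' \<and> E = E' \<and> L = L')"
  proof (intro impI allI, elim conjE)
    fix P Q E L P' Q' E' L'
    assume sc: "\<forall>i. strictly_concave_on input_dom (F i) \<and> strictly_convex_on {0..} (W i)"
      and h: "\<forall>i. 0 < P $ i" "competitive_equilibrium F W D PE P Q E L"
        "\<forall>i. 0 < P' $ i" "competitive_equilibrium F W D PE P' Q' E' L'"
    have PP: "P = P'" using e.price_unique[OF h(1,3,2,4)] .
    note f1 = e.ce_facts[OF h(2)] and f2 = e.ce_facts[OF h(4)]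
    have "(Q$i, E$i, L$i) = (Q'$i, E'$i, L'$i)" for i
    proof (rule e.firm_unique[of i P])
      show "strictly_concave_on input_dom (F i)" using sc by blast
      show "\<forall>k. 0 < P$k" by (rule h(1))
      show "(Q$i, E$i, L$i) \<in> input_dom" by (rule f1(1))
      show "\<forall>w\<in>input_dom. e.obj i P w \<le> e.obj i P (Q$i, E$i, L$i)" using f1(2) by blast
      show "(Q'$i, E'$i, L'$i) \<in> input_dom" by (rule f2(1))
      show "\<forall>w\<in>input_dom. e.obj i P w \<le> e.obj i P (Q'$i, E'$i, L'$i)" using f2(2) PP by blast
    qed
    then have "Q = Q'" "E = E'" "L = L'" by (simp_all add: vec_eq_iff)
    then show "P = P' \<and> Q = Q' \<and> E = E' \<and> L = L'" using PP by simp
  qed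
  show ?thesis using ex pu fu by blast
qed

end
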